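(* Let $N=n+1\ge3$ and let $h=\operatorname{trop}(F^R_{C_N,k})$ (the same tropical polynomial for every $k=1,\dots,n$) be the tropicalization, with respect to the valuation described below, of the unmixed synchronization system. Then the tropical hypersurface defined by $h$ has exactly $N\binom{N-1}{\lfloor (N-1)/2\rfloor}$ (stable) self-intersection points, and each intersection point has multiplicity one.
   Context: $C_N$ is the cycle graph on vertices $0,\dots,N-1$ with edge set $\mathcal{E}(C_N)=\{\{0,1\},\dots,\{N-2,N-1\},\{N-1,0\}\}$; $\mathbf{e}_1,\dots,\mathbf{e}_n$ is the standard basis of $\mathbb{R}^n$ with $\mathbf{e}_0=\mathbf{0}$. The unmixed synchronization system is $F^R_{C_N,k}(\mathbf{x}) = c^R_k - \sum_{\{i,j\}\in\mathcal{E}(C_N)}(a^R_{ijk}x_i/x_j + a^R_{jik}x_j/x_i)$, $k=1,\dots,n$, with $x_0=1$, whose nonzero coefficients lie in a field with a valuation $\operatorname{val}$ (e.g. Puiseux series) satisfying $\operatorname{val}(c^R_k)=0$ and $\operatorname{val}(a^R_{ijk})=2$ if $N$ is even and $\{i,j\}=\{0,1\}$, $\operatorname{val}(a^R_{ijk})=1$ otherwise. Its tropicalization is $h(\mathbf{w}) = \min\big(0,\ \min_{(i,j)}(\operatorname{val}(a^R_{ijk}) + \langle\mathbf{w},\mathbf{e}_i-\mathbf{e}_j\rangle)\big)$ for $\mathbf{w}\in\mathbb{R}^n$, the inner minimum over ordered pairs $(i,j)$ with $\{i,j\}\in\mathcal{E}(C_N)$; this is independent of $k$. The self-intersection points of the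 tropical hypersurface of $h$ are the points of the stable intersection of $n$ copies of this tropical hypersurface, with their tropical intersection multiplicities. *)

theory Defs
  imports "HOL-Analysis.Analysis"
begin

text \<open>Vectors of R^n are represented as functions nat => real, only coordinates 1..n
  are used (coordinate 0 plays the role of the dehomogenised variable x_0 = 1).\<close>

definition unitv :: "nat \<Rightarrow> nat \<Rightarrow> real" where
  "unitv i = (\<lambda>k. if k = i \<and> i \<noteq> 0 then 1 else 0)"

definition ip :: "nat \<Rightarrow> (nat \<Rightarrow> real) \<Rightarrow> (nat \<Rightarrow> real) \<Rightarrow> real" where
  "ip n w v = (\<Sum>k\<in>{1..n}. w k * v k)"

definition cycle_edges :: "nat \<Rightarrow> nat set set" where
  "cycle_edges N = {{i, (i + 1) mod N} | i. i < N}"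

text \<open>valuations of the coefficients a^R_{ijk}\<close>
definition val_a :: "nat \<Rightarrow> nat \<Rightarrow> nat \<Rightarrow> real" where
  "val_a N i j = (if even N \<and> {i, j} = {0, 1} then 2 else 1)"

text \<open>A tropical polynomial is a finite set of terms (exponent vector, coefficient);
  it evaluates to min over terms of (coefficient + <w, exponent>).\<close>
type_synonym trop_poly = "((nat \<Rightarrow> real) \<times> real) set"

definition trop_eval :: "trop_poly \<Rightarrow> nat \<Rightarrow> (nat \<Rightarrow> real) \<Rightarrow> real" where
  "trop_eval T n w = Min ((\<lambda>(a, c). c + ip n w a) ` T)"

text \<open>The tropicalization h of F^R_{C_N,k} (same for all k): constant term 0 and terms
  val(a_ij) + <w, e_i - e_j> for ordered pairs (i,j) with {i,j} an edge of C_N.\<close>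
definition h_terms :: "nat \<Rightarrow> trop_poly" where
  "h_terms N = insert ((\<lambda>_. 0), 0)
     {((\<lambda>k. unitv i k - unitv j k), val_a N i j) | i j. {i, j} \<in> cycle_edges N}"

definition init_exps :: "trop_poly \<Rightarrow> nat \<Rightarrow> (nat \<Rightarrow> real) \<Rightarrow> (nat \<Rightarrow> real) set" where
  "init_exps T n w = {a. \<exists>c. (a, c) \<in> T \<and> c + ip n w a = trop_eval T n w}"

definition conv_hull :: "(nat \<Rightarrow> real) set \<Rightarrow> (nat \<Rightarrow> real) set" where
  "conv_hull S = {x. \<exists>u. (\<forall>p\<in>S. 0 \<le> u p) \<and> sum u S = 1 \<and> x = (\<lambda>k. \<Sum>p\<in>S. u p * p k)}"

definition vol :: "nat \<Rightarrow> (nat \<Rightarrow> real) set \<Rightarrow> real" where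
  "vol n P = measure (PiM {1..n} (\<lambda>_. lborel)) ((\<lambda>x. restrict x {1..n}) ` P)"

definition mink_sum :: "(nat \<Rightarrow> (nat \<Rightarrow> real) set) \<Rightarrow> nat set \<Rightarrow> (nat \<Rightarrow> real) set" where
  "mink_sum P S = {(\<lambda>k. \<Sum>i\<in>S. x i k) | x. \<forall>i\<in>S. x i \<in> P i}"

text \<open>mixed volume MV(P_1,...,P_n), normalised so that MV(P,...,P) = n! vol(P)\<close>
definition mixed_volume :: "nat \<Rightarrow> (nat \<Rightarrow> (nat \<Rightarrow> real) set) \<Rightarrow> real" where
  "mixed_volume n P = (\<Sum>S\<in>Pow {1..n}. (-1) ^ (n - card S) * vol n (mink_sum P S))"

text \<open>Stable intersection multiplicity at w of the tropical hypersurfaces of T 1, ..., T n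
  in R^n: mixed volume of the initial Newton polytopes at w.\<close>
definition stable_mult :: "nat \<Rightarrow> (nat \<Rightarrow> trop_poly) \<Rightarrow> (nat \<Rightarrow> real) \<Rightarrow> real" where
  "stable_mult n T w = mixed_volume n (\<lambda>i. conv_hull (init_exps (T i) n w))"

definition pts :: "nat \<Rightarrow> (nat \<Rightarrow> real) set" where
  "pts n = {w. \<forall>k. k \<notin> {1..n} \<longrightarrow> w k = 0}"

definition self_int_mult :: "nat \<Rightarrow> (nat \<Rightarrow> real) \<Rightarrow> real" where
  "self_int_mult N w = stable_mult (N - 1) (\<lambda>_. h_terms N) w"

definition self_int_points :: "nat \<Rightarrow> (nat \<Rightarrow> real) set" where
  "self_int_points N = {w \<in> pts (N - 1). self_int_mult N w \<noteq> 0}"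

end

theory Submission
  imports Defs
begin


lemma tri_measure:
  fixes r :: "nat \<Rightarrow> nat" and \<epsilon> :: "nat \<Rightarrow> real" and g :: "nat \<Rightarrow> (nat \<Rightarrow> real) \<Rightarrow> real"
  assumes "finite I" "inj_on r I" "\<forall>c\<in>I. \<bar>\<epsilon> c\<bar> = 1"
   and "\<forall>c\<in>I. \<forall>x y. (\<forall>i\<in>I. r i < r c \<longrightarrow> x i = y i) \<longrightarrow> g c x = g c y"
   and "\<forall>c\<in>I. \<forall>J. J \<subseteq> I \<longrightarrow> {i\<in>I. r i < r c} \<subseteq> J \<longrightarrow> g c \<in> borel_measurable (PiM J (\<lambda>_. lborel))"
   and "f \<in> borel_measurable (PiM I (\<lambda>_. lborel))"
  shows "(\<integral>\<^sup>+x. f (restrict (\<lambda>c. \<epsilon> c * x c + g c x) I) \<partial>PiM I (\<lambda>_. lborel))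
       = (\<integral>\<^sup>+x. f x \<partial>PiM I (\<lambda>_. lborel))"
  using assms
proof (induction "card I" arbitrary: I f)
  case 0
  then have I: "I = {}" by simp
  show ?case unfolding I
    by (intro nn_integral_cong) (simp add: space_PiM_empty)
next
  case (Suc k I f)
  interpret product_sigma_finite "\<lambda>_::nat. lborel::real measure" by standard
  have fin: "finite I" and ne: "I \<noteq> {}" using Suc by auto
  obtain m where mI: "m \<in> I" and mmax: "\<forall>i\<in>I. r i \<le> r m"
  proof -
    have "Max (r ` I) \<in> r ` I" using fin ne by simp
    then obtain m where "m \<in> I" "r m = Max (r ` I)" by auto
    moreover have "\<forall>i\<in>I. r i \<le> Max (r ` I)" using fin by simp
    ultimately show ?thesis using that by auto
  qed
  define I' where "I' = I - {m}"
  have I: "I = insert m I'" and mI': "m \<notin> I'" and finI': "finite I'" using mI fin by (auto simp: I'_def)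
  have lt: "\<forall>i\<in>I'. r i < r m"
    using mmax Suc.prems(2) mI by (auto simp: I'_def inj_on_def le_less)
  define T where "T = (\<lambda>x. restrict (\<lambda>c. \<epsilon> c * x c + g c x) I)"
  define T' where "T' = (\<lambda>x. restrict (\<lambda>c. \<epsilon> c * x c + g c x) I')"
  have gmeas: "g c \<in> borel_measurable (PiM I (\<lambda>_. lborel))" if "c \<in> I" for c
    using Suc.prems(5) that by auto
  have Tmeas: "T \<in> measurable (PiM I (\<lambda>_. lborel)) (PiM I (\<lambda>_. lborel))"
    unfolding T_def using gmeas
    by (intro measurable_restrict) (auto intro!: borel_measurable_add borel_measurable_times measurable_component_singleton)
  have key: "T (x(m:=y)) = (T' x)(m := \<epsilon> m * y + g m x)" for x y
  proof
    fix c
    show "T (x(m:=y)) c = ((T' x)(m := \<epsilon> m * y + g m x)) c"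
    proof (cases "c = m")
      case True
      have D: "\<And>a b. (\<forall>i\<in>I. r i < r m \<longrightarrow> a i = b i) \<Longrightarrow> g m a = g m b"
        using Suc.prems(4) mI by blast
      have "g m (x(m:=y)) = g m x" by (rule D) auto
      then show ?thesis using True mI by (simp add: T_def)
    next
      case False
      show ?thesis
      proof (cases "c \<in> I")
        case True
        then have cI': "c \<in> I'" using False by (simp add: I'_def)
        have D: "\<And>a b. (\<forall>i\<in>I. r i < r c \<longrightarrow> a i = b i) \<Longrightarrow> g c a = g c b"
          using Suc.prems(4) True by blast
        have "r c \<le> r m" using mmax True by blast
        then have "g c (x(m:=y)) = g c x" by (intro D) auto
        then show ?thesis using False True cI' by (simp add: T_def T'_def)
      next
        case False
        then show ?thesis using \<open>c \<noteq> m\<close> by (simp add: T_def T'_def I'_def)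
      qed
    qed
  qed
  have fT: "(\<lambda>x. f (T x)) \<in> borel_measurable (PiM (insert m I') (\<lambda>_. lborel))"
    using measurable_comp[OF Tmeas Suc.prems(6)] I by (simp add: comp_def)
  have "(\<integral>\<^sup>+x. f (T x) \<partial>PiM I (\<lambda>_. lborel))
      = (\<integral>\<^sup>+ x. (\<integral>\<^sup>+ y. f (T (x(m := y))) \<partial>lborel) \<partial>PiM I' (\<lambda>_. lborel))"
    unfolding I by (rule product_nn_integral_insert[OF finI' mI' fT])
  also have "\<dots> = (\<integral>\<^sup>+ x. (\<integral>\<^sup>+ y. f ((T' x)(m := y)) \<partial>lborel) \<partial>PiM I' (\<lambda>_. lborel))"
  proof (rule nn_integral_cong)
    fix x :: "nat \<Rightarrow> real" assume x: "x \<in> space (PiM I' (\<lambda>_. lborel))"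
    have T'x: "T' x \<in> space (PiM I' (\<lambda>_. lborel))"
      by (simp add: T'_def space_PiM)
    have Fm: "(\<lambda>y. f ((T' x)(m := y))) \<in> borel_measurable lborel"
      using measurable_comp[OF measurable_component_update[OF T'x mI'] Suc.prems(6)[unfolded I]]
      by (simp add: comp_def)
    have e: "\<epsilon> m \<noteq> 0" using Suc.prems(3) mI by auto
    have "(\<integral>\<^sup>+ y. f ((T' x)(m := y)) \<partial>lborel)
        = ennreal \<bar>\<epsilon> m\<bar> * (\<integral>\<^sup>+ y. f ((T' x)(m := g m x + \<epsilon> m * y)) \<partial>lborel)"
      using nn_integral_real_affine[OF Fm[unfolded measurable_lborel2] e, of "g m x"]
      by simp
    also have "\<dots> = (\<integral>\<^sup>+ y. f (T (x(m := y))) \<partial>lborel)"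
      using Suc.prems(3) mI by (simp add: key add.commute)
    finally show "(\<integral>\<^sup>+ y. f (T (x(m := y))) \<partial>lborel) = (\<integral>\<^sup>+ y. f ((T' x)(m := y)) \<partial>lborel)"
      by simp
  qed
  also have "\<dots> = (\<integral>\<^sup>+ x. (\<integral>\<^sup>+ y. f (x(m := y)) \<partial>lborel) \<partial>PiM I' (\<lambda>_. lborel))"
  proof -
    have F2: "(\<lambda>z. \<integral>\<^sup>+ y. f (z(m := y)) \<partial>lborel) \<in> borel_measurable (PiM I' (\<lambda>_. lborel))"
    proof -
      have "(\<lambda>(z, y). f (z(m := y))) \<in> borel_measurable (PiM I' (\<lambda>_. lborel) \<Otimes>\<^sub>M lborel)"
        using measurable_comp[OF measurable_add_dim[of m I' "\<lambda>_. lborel"] Suc.prems(6)[unfolded I]]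
        by (simp add: comp_def case_prod_beta')
      from sigma_finite_measure.borel_measurable_nn_integral_fst[OF _ this]
      show ?thesis by (simp add: lborel.sigma_finite_measure_axioms)
    qed
    have IH: "(\<integral>\<^sup>+x. (\<lambda>z. \<integral>\<^sup>+ y. f (z(m := y)) \<partial>lborel) (restrict (\<lambda>c. \<epsilon> c * x c + g c x) I') \<partial>PiM I' (\<lambda>_. lborel))
       = (\<integral>\<^sup>+x. (\<lambda>z. \<integral>\<^sup>+ y. f (z(m := y)) \<partial>lborel) x \<partial>PiM I' (\<lambda>_. lborel))"
    proof (rule Suc.hyps(1))
      show "k = card I'" using Suc.hyps(2) I mI' finI' by simp
      show "finite I'" by fact
      show "inj_on r I'" using Suc.prems(2) by (auto simp: I'_def inj_on_def)
      show "\<forall>c\<in>I'. \<bar>\<epsilon> c\<bar> = 1" using Suc.prems(3) by (auto simp: I'_def)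
      show "\<forall>c\<in>I'. \<forall>x y. (\<forall>i\<in>I'. r i < r c \<longrightarrow> x i = y i) \<longrightarrow> g c x = g c y"
      proof (intro ballI allI impI)
        fix c and x y :: "nat \<Rightarrow> real" assume c: "c \<in> I'" and h: "\<forall>i\<in>I'. r i < r c \<longrightarrow> x i = y i"
        have "r c \<le> r m" using mmax c by (auto simp: I'_def)
        then have "\<forall>i\<in>I. r i < r c \<longrightarrow> x i = y i"
          using h by (auto simp: I'_def)
        then show "g c x = g c y" using Suc.prems(4) c by (auto simp: I'_def)
      qed
      show "\<forall>c\<in>I'. \<forall>J. J \<subseteq> I' \<longrightarrow> {i\<in>I'. r i < r c} \<subseteq> J \<longrightarrow> g c \<in> borel_measurable (PiM J (\<lambda>_. lborel))"
      proof (intro ballI allI impI)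
        fix c J assume c: "c \<in> I'" and J: "J \<subseteq> I'" "{i\<in>I'. r i < r c} \<subseteq> J"
        have "r c \<le> r m" using mmax c by (auto simp: I'_def)
        then have "{i\<in>I. r i < r c} \<subseteq> J"
          using J by (auto simp: I'_def)
        then show "g c \<in> borel_measurable (PiM J (\<lambda>_. lborel))"
          using Suc.prems(5) c J by (auto simp: I'_def)
      qed
      show "(\<lambda>z. \<integral>\<^sup>+ y. f (z(m := y)) \<partial>lborel) \<in> borel_measurable (PiM I' (\<lambda>_. lborel))" by fact
    qed
    then show ?thesis by (simp add: T'_def)
  qed
  also have "\<dots> = (\<integral>\<^sup>+x. f x \<partial>PiM I (\<lambda>_. lborel))"
    unfolding I by (rule product_nn_integral_insert[OF finI' mI' Suc.prems(6)[unfolded I], symmetric])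
  finally show ?case by (simp add: T_def)
qed


lemma hyper_null:
  fixes c :: "nat \<Rightarrow> real"
  assumes fin: "finite I" and mI: "m \<in> I" and cm: "c m \<noteq> 0"
  shows "emeasure (PiM I (\<lambda>_. lborel)) {x \<in> space (PiM I (\<lambda>_. lborel)). (\<Sum>k\<in>I. c k * x k) = D} = 0"
proof -
  interpret product_sigma_finite "\<lambda>_::nat. lborel::real measure" by standard
  define I' where "I' = I - {m}"
  have I: "I = insert m I'" and mI': "m \<notin> I'" and finI': "finite I'" using mI fin by (auto simp: I'_def)
  define H where "H = {x \<in> space (PiM I (\<lambda>_. lborel)). (\<Sum>k\<in>I. c k * x k) = D}"
  have Hm: "H \<in> sets (PiM I (\<lambda>_. lborel))" unfolding H_def by measurable
  have "emeasure (PiM I (\<lambda>_. lborel)) H = (\<integral>\<^sup>+x. indicator H x \<partial>PiM I (\<lambda>_. lborel))"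
    using Hm by simp
  also have "\<dots> = (\<integral>\<^sup>+ x. (\<integral>\<^sup>+ y. indicator H (x(m := y)) \<partial>lborel) \<partial>PiM I' (\<lambda>_. lborel))"
    unfolding I by (rule product_nn_integral_insert[OF finI' mI']) (use Hm I in simp)
  also have "\<dots> = (\<integral>\<^sup>+ x. 0 \<partial>PiM I' (\<lambda>_. lborel::real measure))"
  proof (rule nn_integral_cong)
    fix x :: "nat \<Rightarrow> real" assume x: "x \<in> space (PiM I' (\<lambda>_. lborel))"
    have "(\<integral>\<^sup>+ y. indicator H (x(m := y)) \<partial>lborel) = (\<integral>\<^sup>+ y. indicator {(D - (\<Sum>k\<in>I'. c k * x k)) / c m} y \<partial>lborel)"
    proof (rule nn_integral_cong)
      fix y :: real
      have sp: "x(m := y) \<in> space (PiM I (\<lambda>_. lborel))"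
        using x I by (auto simp: space_PiM PiE_def extensional_def)
      have s: "(\<Sum>k\<in>I. c k * (x(m := y)) k) = c m * y + (\<Sum>k\<in>I'. c k * x k)"
        unfolding I using mI' finI' by (simp add: sum.insert) (intro sum.cong, auto)
      have "(c m * y + (\<Sum>k\<in>I'. c k * x k) = D) \<longleftrightarrow> y = (D - (\<Sum>k\<in>I'. c k * x k)) / c m"
        using cm by (auto simp: field_simps)
      then show "indicator H (x(m := y)) = (indicator {(D - (\<Sum>k\<in>I'. c k * x k)) / c m} y :: ennreal)"
        using sp s by (simp add: H_def indicator_def)
    qed
    also have "\<dots> = 0" by simp
    finally show "(\<integral>\<^sup>+ y. indicator H (x(m := y)) \<partial>lborel) = 0" .
  qed
  also have "\<dots> = 0" by simp
  finally show ?thesis unfolding H_def .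
qed

lemma ip_lin_conv:
  assumes "finite S0" "\<forall>a\<in>S0. ip n c a = D" "x \<in> conv_hull S0"
  shows "ip n c x = D"
proof -
  obtain u where u: "\<forall>p\<in>S0. 0 \<le> u p" "sum u S0 = 1" "x = (\<lambda>k. \<Sum>p\<in>S0. u p * p k)"
    using assms(3) unfolding conv_hull_def by blast
  have "ip n c x = (\<Sum>k\<in>{1..n}. \<Sum>p\<in>S0. c k * (u p * p k))"
    unfolding ip_def u(3) by (simp add: sum_distrib_left)
  also have "\<dots> = (\<Sum>p\<in>S0. u p * ip n c p)"
    unfolding ip_def by (subst sum.swap) (simp add: sum_distrib_left mult_ac)
  also have "\<dots> = (\<Sum>p\<in>S0. u p * D)" using assms(2) by simp
  also have "\<dots> = D" using u(2) by (simp add: sum_distrib_right[symmetric])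
  finally show ?thesis .
qed

lemma ip_lin_mink:
  assumes "finite S" "\<forall>i\<in>S. \<forall>x\<in>P i. ip n c x = D" "x \<in> mink_sum P S"
  shows "ip n c x = real (card S) * D"
proof -
  obtain y where y: "x = (\<lambda>k. \<Sum>i\<in>S. y i k)" "\<forall>i\<in>S. y i \<in> P i"
    using assms(3) unfolding mink_sum_def by blast
  have "ip n c x = (\<Sum>i\<in>S. ip n c (y i))"
    unfolding ip_def y(1) by (subst sum.swap) (simp add: sum_distrib_left)
  also have "\<dots> = (\<Sum>i\<in>S. D)" using assms(2) y(2) by simp
  finally show ?thesis by simp
qed

lemma vol_hyper_zero:
  fixes c :: "nat \<Rightarrow> real"
  assumes "k \<in> {1..n}" "c k \<noteq> 0" "\<forall>x\<in>Q. ip n c x = D'"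
  shows "vol n Q = 0"
proof -
  let ?M = "PiM {1..n} (\<lambda>_. lborel::real measure)"
  define H where "H = {x \<in> space ?M. (\<Sum>k\<in>{1..n}. c k * x k) = D'}"
  have Hn: "H \<in> null_sets ?M"
  proof -
    have "H \<in> sets ?M" unfolding H_def by measurable
    moreover have "emeasure ?M H = 0" unfolding H_def by (rule hyper_null) (use assms in auto)
    ultimately show ?thesis by (simp add: null_sets_def)
  qed
  have sub: "(\<lambda>x. restrict x {1..n}) ` Q \<subseteq> H"
  proof
    fix z assume "z \<in> (\<lambda>x. restrict x {1..n}) ` Q"
    then obtain x where x: "x \<in> Q" "z = restrict x {1..n}" by blast
    have "(\<Sum>k\<in>{1..n}. c k * z k) = ip n c x" unfolding ip_def x(2) by simp
    then show "z \<in> H" using x assms(3) by (simp add: H_def space_PiM x(2))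
  qed
  show ?thesis
  proof (cases "(\<lambda>x. restrict x {1..n}) ` Q \<in> sets ?M")
    case True
    then have "(\<lambda>x. restrict x {1..n}) ` Q \<in> null_sets ?M" using null_sets_subset[OF Hn True sub] by simp
    then show ?thesis unfolding vol_def by (simp add: measure_def null_setsD1)
  next
    case False
    then show ?thesis unfolding vol_def by (simp add: measure_notin_sets)
  qed
qed

lemma mixed_volume_zero:
  fixes c :: "nat \<Rightarrow> real"
  assumes "finite S0" "k \<in> {1..n}" "c k \<noteq> 0" "\<forall>a\<in>S0. ip n c a = D"
  shows "mixed_volume n (\<lambda>i. conv_hull S0) = 0"
proof -
  have "vol n (mink_sum (\<lambda>i. conv_hull S0) S) = 0" if "S \<in> Pow {1..n}" for S
  proof (rule vol_hyper_zero[where c=c and k=k])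
    show "k \<in> {1..n}" "c k \<noteq> 0" using assms by auto
    have fS: "finite S" using that finite_subset by auto
    show "\<forall>x\<in>mink_sum (\<lambda>i. conv_hull S0) S. ip n c x = real (card S) * D"
    proof
      fix x assume x: "x \<in> mink_sum (\<lambda>i. conv_hull S0) S"
      have "\<forall>i\<in>S. \<forall>x\<in>conv_hull S0. ip n c x = D"
        using ip_lin_conv[OF assms(1,4)] by blast
      then show "ip n c x = real (card S) * D" by (rule ip_lin_mink[OF fS _ x])
    qed
  qed
  then show ?thesis unfolding mixed_volume_def by simp
qed


definition GA :: "'a set \<Rightarrow> nat \<Rightarrow> real \<Rightarrow> real" where
  "GA A m t = (\<Sum>S\<in>Pow A. (-1)^(card A - card S) * (real (card S) + t)^m)"

lemma pow_diff_binom: "(x + 1::real)^m - x^m = (\<Sum>i<m. real (m choose i) * x^i)"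
proof -
  have "(x + 1::real)^m = (\<Sum>i\<le>m. real (m choose i) * x^i)"
    by (subst binomial_ring) simp
  also have "\<dots> = (\<Sum>i<m. real (m choose i) * x^i) + x^m"
    by (simp add: lessThan_Suc_atMost[symmetric])
  finally show ?thesis by simp
qed

lemma GA_insert:
  assumes fA: "finite A" and aA: "a \<notin> A"
  shows "GA (insert a A) m t = (\<Sum>i<m. real (m choose i) * GA A i t)"
proof -
  have cardI: "card (insert a A) = Suc (card A)" using fA aA by simp
  have inj: "inj_on (insert a) (Pow A)" using aA by (auto simp: inj_on_def)
  have disj: "Pow A \<inter> insert a ` Pow A = {}" using aA by auto
  have le: "card S \<le> card A" if "S \<in> Pow A" for S using that fA by (simp add: card_mono)
  have cS: "card (insert a S) = Suc (card S)" if "S \<in> Pow A" for S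
    using that fA aA finite_subset by (subst card_insert_disjoint) auto
  have "GA (insert a A) m t = (\<Sum>S\<in>Pow A. (-1)^(Suc (card A) - card S) * (real (card S) + t)^m)
         + (\<Sum>S\<in>insert a ` Pow A. (-1)^(Suc (card A) - card S) * (real (card S) + t)^m)"
    unfolding GA_def cardI Pow_insert using fA disj by (subst sum.union_disjoint) auto
  also have "(\<Sum>S\<in>insert a ` Pow A. (-1)^(Suc (card A) - card S) * (real (card S) + t)^m)
      = (\<Sum>S\<in>Pow A. (-1)^(card A - card S) * (real (card S) + (t + 1))^m)"
    using inj by (subst sum.reindex) (auto simp: cS intro!: sum.cong simp: algebra_simps)
  also have "(\<Sum>S\<in>Pow A. (-1)^(Suc (card A) - card S) * (real (card S) + t)^m)
      = (\<Sum>S\<in>Pow A. - ((-1)^(card A - card S) * (real (card S) + t)^m))"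
    by (intro sum.cong refl) (simp add: Suc_diff_le le)
  finally have "GA (insert a A) m t = (\<Sum>S\<in>Pow A. (-1)^(card A - card S) *
       ((real (card S) + t + 1)^m - (real (card S) + t)^m))"
    by (simp add: sum_negf[symmetric] sum.distrib[symmetric] algebra_simps)
  also have "\<dots> = (\<Sum>S\<in>Pow A. \<Sum>i<m. (-1)^(card A - card S) * (real (m choose i) * (real (card S) + t)^i))"
    by (simp add: pow_diff_binom sum_distrib_left)
  also have "\<dots> = (\<Sum>i<m. real (m choose i) * GA A i t)"
    unfolding GA_def by (subst sum.swap) (simp add: sum_distrib_left mult.left_commute)
  finally show ?thesis .
qed

lemma GA_main:
  assumes "finite A"
  shows "(\<forall>m<card A. \<forall>t. GA A m t = 0) \<and> (\<forall>t. GA A (card A) t = fact (card A))"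
  using assms
proof (induction rule: finite_induct)
  case empty
  show ?case by (simp add: GA_def)
next
  case (insert a A)
  have c: "card (insert a A) = Suc (card A)" using insert by simp
  have z: "GA (insert a A) m t = 0" if "m < Suc (card A)" for m t
  proof -
    have "GA (insert a A) m t = (\<Sum>i<m. real (m choose i) * GA A i t)" by (rule GA_insert) fact+
    also have "\<dots> = 0" using insert.IH that by (intro sum.neutral) auto
    finally show ?thesis .
  qed
  have f: "GA (insert a A) (Suc (card A)) t = fact (Suc (card A))" for t
  proof -
    have "GA (insert a A) (Suc (card A)) t = (\<Sum>i<Suc (card A). real (Suc (card A) choose i) * GA A i t)"
      by (rule GA_insert) fact+
    also have "\<dots> = (\<Sum>i<card A. real (Suc (card A) choose i) * GA A i t) + real (Suc (card A) choose card A) * GA A (card A) t"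
      by simp
    also have "\<dots> = real (Suc (card A)) * fact (card A)"
      using insert.IH by simp
    also have "\<dots> = fact (Suc (card A))" by simp
    finally show ?thesis .
  qed
  show ?case unfolding c using z f by auto
qed

lemma alt_sum_pow:
  "(\<Sum>S\<in>Pow {1..n::nat}. (-1)^(n - card S) * real (card S)^n) = fact n"
proof -
  have "GA {1..n} n 0 = fact n" using GA_main[of "{1..n}"] by simp
  then show ?thesis by (simp add: GA_def)
qed


definition fe :: "nat \<Rightarrow> nat \<Rightarrow> nat \<Rightarrow> real" where
  "fe N e = (\<lambda>k. unitv e k - unitv (Suc e mod N) k)"

definition cvec :: "nat \<Rightarrow> (nat \<Rightarrow> real) \<Rightarrow> nat \<Rightarrow> real" where
  "cvec N \<delta> = (\<lambda>k. if k \<in> {1..N-1} then - (\<Sum>e<k. \<delta> e) else 0)"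

lemma fe_val:
  assumes "N = Suc n" "e \<le> n" "k \<in> {1..n}"
  shows "fe N e k = (if k = e then 1 else 0) - (if k = Suc e then 1 else 0)"
proof (cases "e < n")
  case True
  then have "Suc e mod N = Suc e" using assms by simp
  then show ?thesis using assms by (auto simp: fe_def unitv_def)
next
  case False
  then have "e = n" using assms by simp
  then have "Suc e mod N = 0" using assms by simp
  then show ?thesis using assms \<open>e = n\<close> by (auto simp: fe_def unitv_def)
qed

lemma ip_unitv_pts: "w \<in> pts n \<Longrightarrow> ip n w (unitv i) = w i"
  unfolding ip_def unitv_def pts_def
  by (cases "i \<in> {1..n}") (auto simp: if_distrib cong: if_cong)

lemma ip_diff: "ip n w (\<lambda>k. a k - b k) = ip n w a - ip n w b"
  unfolding ip_def by (simp add: algebra_simps sum_subtractf)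

lemma ip_scale: "ip n w (\<lambda>k. c * a k) = c * ip n w a"
  unfolding ip_def by (simp add: algebra_simps sum_distrib_left)

lemma ip_neg: "ip n w (\<lambda>k. - a k) = - ip n w a"
  unfolding ip_def by (simp add: sum_negf)

lemma ip_zero: "ip n w (\<lambda>k. 0) = 0"
  unfolding ip_def by simp

lemma ip_fe_pts:
  assumes "w \<in> pts n"
  shows "ip n w (fe N e) = w e - w (Suc e mod N)"
  unfolding fe_def using ip_diff[of n w "unitv e" "unitv (Suc e mod N)"] ip_unitv_pts[OF assms]
  by simp

lemma cvec_pts: "cvec N \<delta> \<in> pts (N - 1)"
  unfolding pts_def cvec_def by auto

lemma ip_cvec:
  assumes N: "N = Suc n" and s: "(\<Sum>e<N. \<delta> e) = 0" and e: "e \<le> n"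
  shows "ip n (cvec N \<delta>) (fe N e) = \<delta> e"
proof -
  have cv: "cvec N \<delta> k = - (\<Sum>i<k. \<delta> i)" if "k \<le> n" for k
    using that N by (cases k) (auto simp: cvec_def)
  have "ip n (cvec N \<delta>) (fe N e) = cvec N \<delta> e - cvec N \<delta> (Suc e mod N)"
    using ip_fe_pts[OF cvec_pts[of N \<delta>, unfolded N diff_Suc_1]] N by simp
  also have "\<dots> = \<delta> e"
  proof (cases "e < n")
    case True
    then have "Suc e mod N = Suc e" using N by simp
    then show ?thesis using cv[of e] cv[of "Suc e"] True e by simp
  next
    case False
    then have en: "e = n" using e by simp
    then have "Suc e mod N = 0" using N by simp
    moreover have "cvec N \<delta> 0 = 0" by (simp add: cvec_def)
    moreover have "(\<Sum>i<n. \<delta> i) + \<delta> n = 0" using s N by simp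
    ultimately show ?thesis using cv[of n] en by simp
  qed
  finally show ?thesis .
qed

lemma cvec_nonzero:
  assumes N: "N = Suc n" and s: "(\<Sum>e<N. \<delta> e) = 0" and e: "e0 \<le> n" "\<delta> e0 \<noteq> 0"
  shows "\<exists>k\<in>{1..n}. cvec N \<delta> k \<noteq> 0"
proof (rule ccontr)
  assume "\<not> ?thesis"
  then have "ip n (cvec N \<delta>) a = 0" for a unfolding ip_def by simp
  then show False using ip_cvec[OF N s e(1)] e(2) by simp
qed


locale cell =
  fixes N n j :: nat and \<sigma> :: "nat \<Rightarrow> real"
  assumes N: "N = Suc n" and n2: "n \<ge> 2" and j: "j \<le> n"
    and sg: "\<forall>e\<le>n. e \<noteq> j \<longrightarrow> \<sigma> e = 1 \<or> \<sigma> e = -1"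
begin

abbreviation E where "E \<equiv> {0..n} - {j}"

definition v :: "nat \<Rightarrow> nat \<Rightarrow> real" where "v e = (\<lambda>k. \<sigma> e * fe N e k)"

definition Cone :: "real \<Rightarrow> (nat \<Rightarrow> real) set" where
  "Cone t = {(\<lambda>k. \<Sum>e\<in>E. l e * v e k) | l. (\<forall>e\<in>E. 0 \<le> l e) \<and> sum l E \<le> t}"

definition mu :: "(nat \<Rightarrow> real) \<Rightarrow> nat \<Rightarrow> real" where
  "mu x e = (if j < e then (\<Sum>i\<in>{Suc j..e}. x i) else - (\<Sum>i\<in>{Suc e..j}. x i))"

definition ed :: "nat \<Rightarrow> nat" where "ed c = (if c \<le> j then c - 1 else c)"

definition Linv :: "(nat \<Rightarrow> real) \<Rightarrow> nat \<Rightarrow> real" where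
  "Linv x = restrict (\<lambda>c. \<sigma> (ed c) * mu x (ed c)) {1..n}"

definition Dl :: "real \<Rightarrow> (nat \<Rightarrow> real) set" where
  "Dl t = {y. (\<forall>c\<in>{1..n}. 0 \<le> y c) \<and> sum y {1..n} \<le> t}"

lemma sq: "e \<in> E \<Longrightarrow> \<sigma> e * \<sigma> e = 1"
  using sg by auto

lemma sum_fe:
  assumes k: "k \<in> {1..n}" and Mj: "M j = 0"
  shows "(\<Sum>e\<in>E. M e * fe N e k) = M k - M (k - 1)"
proof -
  have "(\<Sum>e\<in>E. M e * fe N e k) = (\<Sum>e\<in>{0..n}. M e * fe N e k)"
    using Mj j by (intro sum.mono_neutral_left) auto
  also have "\<dots> = (\<Sum>e\<in>{0..n}. (if e = k then M e else 0) - (if e = k - 1 then M e else 0))"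
    using k by (intro sum.cong refl) (auto simp: fe_val[OF N])
  also have "\<dots> = M k - M (k - 1)"
    using k by (simp add: sum_subtractf) linarith
  finally show ?thesis .
qed

lemma mu_j: "mu x j = 0" by (simp add: mu_def)

lemma mu_step:
  assumes k: "k \<in> {1..n}"
  shows "mu x k - mu x (k - 1) = x k"
proof (cases "j < k")
  case True
  show ?thesis
  proof (cases "j < k - 1")
    case True
    then have "{Suc j..k} = insert k {Suc j..k-1}" using k by auto
    then show ?thesis using True \<open>j < k\<close> by (simp add: mu_def)
  next
    case False
    then have "k = Suc j" using True by simp
    then show ?thesis using False by (simp add: mu_def)
  qed
next
  case False
  then have "{k..j} = insert k {Suc k..j}" using k by auto
  moreover have "Suc (k - 1) = k" using k by simp
  ultimately show ?thesis using False by (simp add: mu_def)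
qed

lemma mu_unique:
  assumes Mj: "M j = 0" and xM: "\<forall>k\<in>{1..n}. x k = M k - M (k - 1)"
  shows "\<forall>e\<le>n. mu x e = M e"
proof -
  define D where "D e = mu x e - M e" for e
  have step: "D (Suc k) = D k" if "Suc k \<le> n" for k
    using mu_step[of "Suc k" x] xM that by (auto simp: D_def)
  have const: "D k = D 0" if "k \<le> n" for k
    using that by (induction k) (auto simp: step)
  have "D j = 0" using Mj by (simp add: D_def mu_j)
  then show ?thesis using const j by (auto simp: D_def) (metis eq_iff_diff_eq_0)
qed

lemma mu_restrict: "e \<le> n \<Longrightarrow> mu (restrict x {1..n}) e = mu x e"
  using j unfolding mu_def by (auto intro!: sum.cong)

lemma ed_bij: "bij_betw ed {1..n} E"
proof (rule bij_betwI[where g = "\<lambda>e. if e < j then Suc e else e"])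
  show "ed \<in> {1..n} \<rightarrow> E" using j by (auto simp: ed_def split: if_splits)
  show "(\<lambda>e. if e < j then Suc e else e) \<in> E \<rightarrow> {1..n}" using j by auto
  show "\<And>x. x \<in> {1..n} \<Longrightarrow> (if ed x < j then Suc (ed x) else ed x) = x" by (auto simp: ed_def)
  show "\<And>y. y \<in> E \<Longrightarrow> ed (if y < j then Suc y else y) = y" by (auto simp: ed_def)
qed

lemma ed_in: "c \<in> {1..n} \<Longrightarrow> ed c \<in> E"
  using ed_bij bij_betwE by blast

end


context cell begin

abbreviation MM where "MM \<equiv> PiM {1..n} (\<lambda>_. lborel::real measure)"

lemma cone_sum_fe:
  assumes "x = (\<lambda>k. \<Sum>e\<in>E. l e * v e k)" "k \<in> {1..n}"
  shows "x k = (\<lambda>e. if e = j then 0 else \<sigma> e * l e) k - (\<lambda>e. if e = j then 0 else \<sigma> e * l e) (k - 1)"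
proof -
  have "x k = (\<Sum>e\<in>E. (\<lambda>e. if e = j then 0 else \<sigma> e * l e) e * fe N e k)"
    unfolding assms(1) v_def by (intro sum.cong refl) auto
  also have "\<dots> = (\<lambda>e. if e = j then 0 else \<sigma> e * l e) k - (\<lambda>e. if e = j then 0 else \<sigma> e * l e) (k - 1)"
    by (rule sum_fe[OF assms(2)]) simp
  finally show ?thesis .
qed

lemma image_cone:
  "(\<lambda>x. restrict x {1..n}) ` Cone t = {x \<in> space MM. Linv x \<in> Dl t}"
proof
  show "(\<lambda>x. restrict x {1..n}) ` Cone t \<subseteq> {x \<in> space MM. Linv x \<in> Dl t}"
  proof
    fix z assume "z \<in> (\<lambda>x. restrict x {1..n}) ` Cone t"
    then obtain x l where z: "z = restrict x {1..n}" and x: "x = (\<lambda>k. \<Sum>e\<in>E. l e * v e k)"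
      and l: "\<forall>e\<in>E. 0 \<le> l e" "sum l E \<le> t"
      unfolding Cone_def by blast
    define M where "M = (\<lambda>e. if e = j then 0 else \<sigma> e * l e)"
    have "\<forall>e\<le>n. mu x e = M e"
      by (rule mu_unique) (use cone_sum_fe[OF x] in \<open>auto simp: M_def\<close>)
    then have muz: "mu z e = M e" if "e \<le> n" for e
      using that mu_restrict z by simp
    have Lz: "Linv z c = l (ed c)" if "c \<in> {1..n}" for c
    proof -
      have e: "ed c \<in> E" using ed_in[OF that] .
      then have "Linv z c = \<sigma> (ed c) * (\<sigma> (ed c) * l (ed c))"
        using that muz[of "ed c"] by (auto simp: Linv_def M_def)
      also have "\<dots> = l (ed c)" using sq[OF e] by (simp add: mult.assoc[symmetric])
      finally show ?thesis .
    qed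
    have "sum (Linv z) {1..n} = sum (l \<circ> ed) {1..n}" using Lz by (intro sum.cong) auto
    also have "\<dots> = sum l E" using sum.reindex_bij_betw[OF ed_bij, of l] by simp
    finally have "sum (Linv z) {1..n} \<le> t" using l by simp
    moreover have "\<forall>c\<in>{1..n}. 0 \<le> Linv z c" using Lz l ed_in by auto
    ultimately show "z \<in> {x \<in> space MM. Linv x \<in> Dl t}"
      unfolding Dl_def z by (auto simp: space_PiM)
  qed
next
  show "{x \<in> space MM. Linv x \<in> Dl t} \<subseteq> (\<lambda>x. restrict x {1..n}) ` Cone t"
  proof
    fix z assume z: "z \<in> {x \<in> space MM. Linv x \<in> Dl t}"
    define l where "l e = \<sigma> e * mu z e" for e
    have le: "l (ed c) = Linv z c" if "c \<in> {1..n}" for c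
      using that by (simp add: Linv_def l_def)
    have "\<forall>c\<in>{1..n}. 0 \<le> Linv z c" "sum (Linv z) {1..n} \<le> t"
      using z by (auto simp: Dl_def)
    have l1: "\<forall>e\<in>E. 0 \<le> l e"
    proof
      fix e assume "e \<in> E"
      then obtain c where c: "c \<in> {1..n}" "e = ed c"
        using bij_betw_imp_surj_on[OF ed_bij] by blast
      then show "0 \<le> l e" using le[OF c(1)] \<open>\<forall>c\<in>{1..n}. 0 \<le> Linv z c\<close> by simp
    qed
    have "sum l E = sum (l \<circ> ed) {1..n}" using sum.reindex_bij_betw[OF ed_bij, of l] by simp
    also have "\<dots> = sum (Linv z) {1..n}" using le by (intro sum.cong) auto
    finally have l2: "sum l E \<le> t" using \<open>sum (Linv z) {1..n} \<le> t\<close> by simp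
    define x where "x = (\<lambda>k. \<Sum>e\<in>E. l e * v e k)"
    have xC: "x \<in> Cone t" unfolding Cone_def x_def using l1 l2 by blast
    have "restrict x {1..n} = z"
    proof
      fix k
      show "restrict x {1..n} k = z k"
      proof (cases "k \<in> {1..n}")
        case True
        have "x k = (\<Sum>e\<in>E. mu z e * fe N e k)"
          unfolding x_def v_def l_def
        proof (intro sum.cong refl)
          fix e assume e: "e \<in> E"
          have "\<sigma> e * mu z e * (\<sigma> e * fe N e k) = (\<sigma> e * \<sigma> e) * (mu z e * fe N e k)"
            by (simp add: mult_ac)
          then show "\<sigma> e * mu z e * (\<sigma> e * fe N e k) = mu z e * fe N e k"
            using sq[OF e] by simp
        qed
        also have "\<dots> = mu z k - mu z (k - 1)" by (rule sum_fe[OF True, of "mu z"]) (rule mu_j)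
        also have "\<dots> = z k" by (rule mu_step[OF True])
        finally show ?thesis using True by simp
      next
        case False
        then show ?thesis using z by (auto simp: space_PiM PiE_def extensional_def)
      qed
    qed
    then show "z \<in> (\<lambda>x. restrict x {1..n}) ` Cone t" using xC by (intro image_eqI[where x=x]) auto
  qed
qed

end


context cell begin

definition eps :: "nat \<Rightarrow> real" where "eps c = (if c \<le> j then - \<sigma> (c - 1) else \<sigma> c)"
definition gg :: "nat \<Rightarrow> (nat \<Rightarrow> real) \<Rightarrow> real" where
  "gg c x = (if c \<le> j then - \<sigma> (c - 1) * (\<Sum>i\<in>{Suc c..j}. x i) else \<sigma> c * (\<Sum>i\<in>{Suc j..<c}. x i))"
definition rk :: "nat \<Rightarrow> nat" where "rk c = (if c \<le> j then 2 * N - c else c)"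

lemma Linv_tri: "Linv x = restrict (\<lambda>c. eps c * x c + gg c x) {1..n}"
proof
  fix c
  show "Linv x c = restrict (\<lambda>c. eps c * x c + gg c x) {1..n} c"
  proof (cases "c \<in> {1..n}")
    case True
    show ?thesis
    proof (cases "c \<le> j")
      case True
      have "{Suc (c - 1)..j} = insert c {Suc c..j}" using True \<open>c \<in> {1..n}\<close> by auto
      then show ?thesis using True \<open>c \<in> {1..n}\<close>
        by (simp add: Linv_def ed_def mu_def eps_def gg_def algebra_simps)
    next
      case False
      have "{Suc j..c} = insert c {Suc j..<c}" using False by auto
      then show ?thesis using False \<open>c \<in> {1..n}\<close>
        by (simp add: Linv_def ed_def mu_def eps_def gg_def algebra_simps)
    qed
  next
    case False
    then show ?thesis by (simp only: Linv_def restrict_apply False if_False)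
  qed
qed

lemma rk_low1: "c \<in> {1..n} \<Longrightarrow> c \<le> j \<Longrightarrow> i \<in> {Suc c..j} \<Longrightarrow> i \<in> {1..n} \<and> rk i < rk c"
proof -
  have nN: "n < N" using N by simp
  assume "c \<in> {1..n}" "c \<le> j" "i \<in> {Suc c..j}"
  then show ?thesis using nN j by (auto simp: rk_def)
qed

lemma rk_low2: "c \<in> {1..n} \<Longrightarrow> \<not> c \<le> j \<Longrightarrow> i \<in> {Suc j..<c} \<Longrightarrow> i \<in> {1..n} \<and> rk i < rk c"
  by (auto simp: rk_def)

lemma gg_meas:
  assumes c: "c \<in> {1..n}" and J: "J \<subseteq> {1..n}" "{i \<in> {1..n}. rk i < rk c} \<subseteq> J"
  shows "gg c \<in> borel_measurable (PiM J (\<lambda>_. lborel))"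
proof (cases "c \<le> j")
  case True
  have nN: "n < N" using N by simp
  have "\<forall>i\<in>{Suc c..j}. i \<in> {1..n} \<and> rk i < rk c" using True c j nN by (auto simp: rk_def)
  then have sub: "{Suc c..j} \<subseteq> J" using J(2) by blast
  have "(\<lambda>x. \<Sum>i\<in>{Suc c..j}. x i) \<in> borel_measurable (PiM J (\<lambda>_. lborel::real measure))"
    using sub by (intro borel_measurable_sum) (auto intro!: measurable_component_singleton)
  then show ?thesis using True unfolding gg_def by simp
next
  case False
  have "\<forall>i\<in>{Suc j..<c}. i \<in> {1..n} \<and> rk i < rk c" using False c j by (auto simp: rk_def)
  then have sub: "{Suc j..<c} \<subseteq> J" using J(2) by blast
  have "(\<lambda>x. \<Sum>i\<in>{Suc j..<c}. x i) \<in> borel_measurable (PiM J (\<lambda>_. lborel::real measure))"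
    using sub by (intro borel_measurable_sum) (auto intro!: measurable_component_singleton)
  then show ?thesis using False unfolding gg_def by simp
qed

lemma Linv_meas: "Linv \<in> measurable MM MM"
  unfolding Linv_tri
proof (rule measurable_restrict)
  fix c assume c: "c \<in> {1..n}"
  have "gg c \<in> borel_measurable MM" by (rule gg_meas[OF c]) auto
  moreover have "(\<lambda>x. x c) \<in> borel_measurable MM" using c by (auto intro!: measurable_component_singleton)
  ultimately show "(\<lambda>x. eps c * x c + gg c x) \<in> measurable MM lborel" by simp
qed

lemma emeasure_Linv:
  assumes t: "t \<ge> 0"
  shows "emeasure MM {x \<in> space MM. Linv x \<in> Dl t} = ennreal (t ^ n / fact n)"
proof -
  have DS: "Dl t \<inter> space MM = {x \<in> space MM. (\<forall>c\<in>{1..n}. 0 \<le> x c) \<and> sum x {1..n} \<le> t}"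
    by (auto simp: Dl_def)
  have Dm: "Dl t \<inter> space MM \<in> sets MM" unfolding DS by measurable
  have Lsp: "Linv x \<in> space MM" for x by (simp add: Linv_def space_PiM)
  have "emeasure MM {x \<in> space MM. Linv x \<in> Dl t} = (\<integral>\<^sup>+x. indicator (Dl t \<inter> space MM) (Linv x) \<partial>MM)"
  proof -
    have m: "{x \<in> space MM. Linv x \<in> Dl t} \<in> sets MM"
    proof -
      have "Linv \<in> measurable MM MM" by (rule Linv_meas)
      then have "Linv -` (Dl t \<inter> space MM) \<inter> space MM \<in> sets MM" using Dm by (rule measurable_sets)
      moreover have "Linv -` (Dl t \<inter> space MM) \<inter> space MM = {x \<in> space MM. Linv x \<in> Dl t}"
        using Lsp by auto
      ultimately show ?thesis by simp
    qed
    have "emeasure MM {x \<in> space MM. Linv x \<in> Dl t} = (\<integral>\<^sup>+x. indicator {x \<in> space MM. Linv x \<in> Dl t} x \<partial>MM)"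
      using m by simp
    also have "\<dots> = (\<integral>\<^sup>+x. indicator (Dl t \<inter> space MM) (Linv x) \<partial>MM)"
      using Lsp by (intro nn_integral_cong) (auto simp: indicator_def)
    finally show ?thesis .
  qed
  also have "\<dots> = (\<integral>\<^sup>+x. indicator (Dl t \<inter> space MM) x \<partial>MM)"
    unfolding Linv_tri
  proof (rule tri_measure[where r = rk])
    show "finite {1..n}" by simp
    have nN: "n < N" using N by simp
    show "inj_on rk {1..n}" using nN j unfolding inj_on_def rk_def by (auto split: if_splits)
    show "\<forall>c\<in>{1..n}. \<bar>eps c\<bar> = 1"
    proof
      fix c assume c: "c \<in> {1..n}"
      show "\<bar>eps c\<bar> = 1"
      proof (cases "c \<le> j")
        case True
        then have "c - 1 \<le> n" "c - 1 \<noteq> j" using c by auto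
        then show ?thesis using sg True by (auto simp: eps_def)
      next
        case False
        then show ?thesis using sg c by (auto simp: eps_def)
      qed
    qed
    show "\<forall>c\<in>{1..n}. \<forall>x y. (\<forall>i\<in>{1..n}. rk i < rk c \<longrightarrow> x i = y i) \<longrightarrow> gg c x = gg c y"
    proof (intro ballI allI impI)
      fix c and x y :: "nat \<Rightarrow> real"
      assume c: "c \<in> {1..n}" and h: "\<forall>i\<in>{1..n}. rk i < rk c \<longrightarrow> x i = y i"
      show "gg c x = gg c y"
      proof (cases "c \<le> j")
        case True
        have "\<forall>i\<in>{Suc c..j}. x i = y i" using h rk_low1[OF c True] by blast
        then show ?thesis using True by (simp add: gg_def)
      next
        case False
        have "\<forall>i\<in>{Suc j..<c}. x i = y i" using h rk_low2[OF c False] by blast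
        then show ?thesis using False by (simp add: gg_def)
      qed
    qed
    show "\<forall>c\<in>{1..n}. \<forall>J. J \<subseteq> {1..n} \<longrightarrow> {i \<in> {1..n}. rk i < rk c} \<subseteq> J \<longrightarrow>
        gg c \<in> borel_measurable (PiM J (\<lambda>_. lborel))"
    proof (intro ballI allI impI)
      fix c J assume c: "c \<in> {1..n}" and J: "J \<subseteq> {1..n}" "{i \<in> {1..n}. rk i < rk c} \<subseteq> J"
      show "gg c \<in> borel_measurable (PiM J (\<lambda>_. lborel))" by (rule gg_meas[OF c J])
    qed
    show "indicator (Dl t \<inter> space MM) \<in> borel_measurable MM" using Dm by simp
  qed
  also have "\<dots> = emeasure MM (Dl t \<inter> space MM)" using Dm by simp
  also have "\<dots> = ennreal (t ^ n / fact n)"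
    using emeasure_std_simplex_aux[of "{1..n}" t] t by (simp add: Dl_def)
  finally show ?thesis .
qed

lemma vol_cone:
  assumes t: "t \<ge> 0"
  shows "vol n (Cone t) = t ^ n / fact n"
  unfolding vol_def image_cone using emeasure_Linv[OF t] t
  by (simp add: measure_def)

end


context cell begin

definition S0 where "S0 = insert (\<lambda>_. 0) (v ` E)"

lemma v_sep:
  assumes e: "e \<in> E"
  shows "\<exists>c. ip n c (v e) \<noteq> 0 \<and> (\<forall>e'\<in>E. e' \<noteq> e \<longrightarrow> ip n c (v e') = 0)"
proof -
  define \<delta> where "\<delta> = (\<lambda>i. if i = e then 1 else if i = j then -1 else (0::real))"
  have ej: "e \<noteq> j" "e < N" "j < N" using e j N by auto
  have s: "(\<Sum>i<N. \<delta> i) = 0"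
  proof -
    have "(\<Sum>i<N. \<delta> i) = (\<Sum>i<N. (if i = e then 1 else 0) - (if i = j then 1 else 0))"
      unfolding \<delta>_def using ej by (intro sum.cong) auto
    also have "\<dots> = 0" using ej by (simp add: sum_subtractf)
    finally show ?thesis .
  qed
  have ipv: "ip n (cvec N \<delta>) (v e') = \<sigma> e' * \<delta> e'" if "e' \<le> n" for e'
    unfolding v_def ip_scale using ip_cvec[OF N s that] by simp
  show ?thesis
  proof (intro exI conjI ballI impI)
    show "ip n (cvec N \<delta>) (v e) \<noteq> 0" using ipv[of e] e sg ej by (auto simp: \<delta>_def)
    fix e' assume "e' \<in> E" "e' \<noteq> e"
    then show "ip n (cvec N \<delta>) (v e') = 0" using ipv[of e'] by (auto simp: \<delta>_def)
  qed
qed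

lemma v_inj: "inj_on v E"
proof (rule inj_onI)
  fix a b assume a: "a \<in> E" and b: "b \<in> E" and eq: "v a = v b"
  show "a = b"
  proof (rule ccontr)
    assume "a \<noteq> b"
    obtain c where "ip n c (v a) \<noteq> 0" "\<forall>e'\<in>E. e' \<noteq> a \<longrightarrow> ip n c (v e') = 0"
      using v_sep[OF a] by blast
    then have "ip n c (v b) = 0" "ip n c (v a) \<noteq> 0" using b \<open>a \<noteq> b\<close> by auto
    then show False using eq by simp
  qed
qed

lemma v_nz:
  assumes e: "e \<in> E" shows "v e \<noteq> (\<lambda>_. 0)"
proof
  assume z: "v e = (\<lambda>_. 0)"
  obtain c where "ip n c (v e) \<noteq> 0" using v_sep[OF e] by blast
  then show False using z ip_zero by simp
qed

lemma conv_S0: "conv_hull S0 = Cone 1"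
proof
  have fin: "finite (v ` E)" by simp
  have nin: "(\<lambda>_. 0) \<notin> v ` E"
  proof
    assume "(\<lambda>_. 0) \<in> v ` E"
    then obtain e where "e \<in> E" "v e = (\<lambda>_. 0)" by (metis imageE)
    then show False using v_nz by blast
  qed
  show "conv_hull S0 \<subseteq> Cone 1"
  proof
    fix x assume "x \<in> conv_hull S0"
    then obtain u where u: "\<forall>p\<in>S0. 0 \<le> u p" "sum u S0 = 1" "x = (\<lambda>k. \<Sum>p\<in>S0. u p * p k)"
      unfolding conv_hull_def by blast
    have "x = (\<lambda>k. \<Sum>p\<in>v ` E. u p * p k)"
      unfolding u(3) S0_def using fin nin by (simp add: sum.insert)
    also have "\<dots> = (\<lambda>k. \<Sum>e\<in>E. (u \<circ> v) e * v e k)"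
      using v_inj by (simp add: sum.reindex)
    finally have x: "x = (\<lambda>k. \<Sum>e\<in>E. (u \<circ> v) e * v e k)" .
    have "sum (u \<circ> v) E = sum u (v ` E)" using v_inj by (simp add: sum.reindex)
    also have "\<dots> = 1 - u (\<lambda>_. 0)" using u(2) fin nin unfolding S0_def by (simp add: sum.insert)
    also have "\<dots> \<le> 1" using u(1) unfolding S0_def by simp
    finally have "sum (u \<circ> v) E \<le> 1" .
    moreover have "\<forall>e\<in>E. 0 \<le> (u \<circ> v) e" using u(1) unfolding S0_def by simp
    ultimately show "x \<in> Cone 1" unfolding Cone_def x by blast
  qed
  show "Cone 1 \<subseteq> conv_hull S0"
  proof
    fix x assume "x \<in> Cone 1"
    then obtain l where x: "x = (\<lambda>k. \<Sum>e\<in>E. l e * v e k)" and l: "\<forall>e\<in>E. 0 \<le> l e" "sum l E \<le> 1"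
      unfolding Cone_def by blast
    define u where "u p = (if p = (\<lambda>_. 0) then 1 - sum l E else l (the_inv_into E v p))" for p
    have uv: "u (v e) = l e" if "e \<in> E" for e
      using that v_nz[OF that] the_inv_into_f_f[OF v_inj that] by (simp add: u_def)
    have "sum u (v ` E) = sum l E" using v_inj uv by (simp add: sum.reindex)
    then have s1: "sum u S0 = 1" unfolding S0_def using fin nin by (simp add: sum.insert u_def)
    have nn: "\<forall>p\<in>S0. 0 \<le> u p" unfolding S0_def using l uv by (auto simp: u_def)
    have "(\<lambda>k. \<Sum>p\<in>S0. u p * p k) = (\<lambda>k. \<Sum>p\<in>v ` E. u p * p k)"
      unfolding S0_def using fin nin by (simp add: sum.insert)
    also have "\<dots> = (\<lambda>k. \<Sum>e\<in>E. u (v e) * v e k)" using v_inj by (simp add: sum.reindex)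
    also have "\<dots> = x" unfolding x using uv by simp
    finally show "x \<in> conv_hull S0" unfolding conv_hull_def using s1 nn by blast
  qed
qed

lemma mink_cone:
  assumes fS: "finite S"
  shows "mink_sum (\<lambda>i. Cone 1) S = Cone (real (card S))"
proof
  show "mink_sum (\<lambda>i. Cone 1) S \<subseteq> Cone (real (card S))"
  proof
    fix x assume "x \<in> mink_sum (\<lambda>i. Cone 1) S"
    then obtain y where x: "x = (\<lambda>k. \<Sum>i\<in>S. y i k)" and y: "\<forall>i\<in>S. y i \<in> Cone 1"
      unfolding mink_sum_def by blast
    have "\<forall>i\<in>S. \<exists>L. y i = (\<lambda>k. \<Sum>e\<in>E. L e * v e k) \<and> (\<forall>e\<in>E. 0 \<le> L e) \<and> sum L E \<le> 1"
      using y unfolding Cone_def by blast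
    from bchoice[OF this] obtain L where L: "\<forall>i\<in>S. y i = (\<lambda>k. \<Sum>e\<in>E. L i e * v e k) \<and> (\<forall>e\<in>E. 0 \<le> L i e) \<and> sum (L i) E \<le> 1"
      by blast
    define l where "l e = (\<Sum>i\<in>S. L i e)" for e
    have "x = (\<lambda>k. \<Sum>i\<in>S. \<Sum>e\<in>E. L i e * v e k)" unfolding x using L by simp
    also have "\<dots> = (\<lambda>k. \<Sum>e\<in>E. l e * v e k)"
      unfolding l_def by (rule ext, subst sum.swap) (simp add: sum_distrib_right)
    finally have x': "x = (\<lambda>k. \<Sum>e\<in>E. l e * v e k)" .
    have "\<forall>e\<in>E. 0 \<le> l e" unfolding l_def using L by (auto intro!: sum_nonneg)
    moreover have "sum l E \<le> real (card S)"
    proof -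
      have "sum l E = (\<Sum>i\<in>S. sum (L i) E)" unfolding l_def by (rule sum.swap)
      also have "\<dots> \<le> (\<Sum>i\<in>S. 1)" using L by (intro sum_mono) auto
      finally show ?thesis by simp
    qed
    ultimately show "x \<in> Cone (real (card S))" unfolding Cone_def x' by blast
  qed
  show "Cone (real (card S)) \<subseteq> mink_sum (\<lambda>i. Cone 1) S"
  proof
    fix x assume "x \<in> Cone (real (card S))"
    then obtain l where x: "x = (\<lambda>k. \<Sum>e\<in>E. l e * v e k)" and l: "\<forall>e\<in>E. 0 \<le> l e" "sum l E \<le> real (card S)"
      unfolding Cone_def by blast
    show "x \<in> mink_sum (\<lambda>i. Cone 1) S"
    proof (cases "S = {}")
      case True
      have "0 \<le> sum l E" using l(1) by (intro sum_nonneg) auto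
      then have "sum l E = 0" using l(2) True by simp
      then have "\<forall>e\<in>E. l e = 0" using l(1) sum_nonneg_eq_0_iff[of E l] by auto
      then have "x = (\<lambda>k. \<Sum>i\<in>S. (\<lambda>_. 0) k)" unfolding x True by simp
      then show ?thesis unfolding mink_sum_def True by auto
    next
      case False
      then have cS: "real (card S) > 0" using fS by (simp add: card_gt_0_iff)
      define y where "y = (\<lambda>k. \<Sum>e\<in>E. (l e / real (card S)) * v e k)"
      have yC: "y \<in> Cone 1"
      proof -
        have s1: "sum (\<lambda>e. l e / real (card S)) E \<le> 1"
          using l(2) cS by (simp add: sum_divide_distrib[symmetric])
        have nn: "\<forall>e\<in>E. 0 \<le> l e / real (card S)" using l(1) cS by simp
        show ?thesis unfolding Cone_def y_def
          by (intro CollectI exI[where x="\<lambda>e. l e / real (card S)"]) (use s1 nn in auto)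
      qed
      have "x = (\<lambda>k. \<Sum>i\<in>S. y k)"
        unfolding x y_def using cS by (simp add: sum_distrib_left)
      then show ?thesis unfolding mink_sum_def using yC by (intro CollectI exI[where x="\<lambda>i. y"]) auto
    qed
  qed
qed

lemma mv_cell: "mixed_volume n (\<lambda>i. conv_hull S0) = 1"
proof -
  have "vol n (mink_sum (\<lambda>i. conv_hull S0) S) = real (card S) ^ n / fact n" if "S \<in> Pow {1..n}" for S
  proof -
    have fS: "finite S" using that finite_subset by auto
    show ?thesis unfolding conv_S0 mink_cone[OF fS] by (rule vol_cone) simp
  qed
  then have "mixed_volume n (\<lambda>i. conv_hull S0) = (\<Sum>S\<in>Pow {1..n}. (-1)^(n - card S) * real (card S)^n) / fact n"
    unfolding mixed_volume_def by (simp add: sum_divide_distrib)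
  also have "\<dots> = 1" using alt_sum_pow[of n] by simp
  finally show ?thesis .
qed

end


definition hh :: "nat \<Rightarrow> nat \<Rightarrow> real" where "hh N e = (if even N \<and> e = 0 then 2 else 1)"
definition dd :: "nat \<Rightarrow> (nat \<Rightarrow> real) \<Rightarrow> nat \<Rightarrow> real" where "dd N w e = ip (N - 1) w (fe N e)"

lemma hh_pos: "hh N e \<ge> 1" by (simp add: hh_def)

lemma val_edge:
  assumes N: "N \<ge> 3" and e: "e < N" and ij: "{i, j} = {e, Suc e mod N}"
  shows "val_a N i j = hh N e"
proof -
  have "{i, j} = {0, 1} \<longleftrightarrow> e = 0"
  proof
    assume h: "{i, j} = {0, 1}"
    show "e = 0"
    proof (rule ccontr)
      assume "e \<noteq> 0"
      have "e \<in> {0, 1}" using h ij by (metis insertI1)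
      then have "e = 1" using \<open>e \<noteq> 0\<close> by simp
      then have "Suc e mod N = 2" using N by simp
      then show False using h ij \<open>e = 1\<close> by (simp add: doubleton_eq_iff)
    qed
  next
    assume "e = 0"
    then show "{i, j} = {0, 1}" using ij N by simp
  qed
  then show ?thesis by (simp add: val_a_def hh_def)
qed

lemma h_terms_eq:
  assumes N: "N \<ge> 3"
  shows "h_terms N = insert (\<lambda>_. 0, 0) ((\<lambda>e. (fe N e, hh N e)) ` {..<N} \<union> (\<lambda>e. (\<lambda>k. - fe N e k, hh N e)) ` {..<N})"
proof -
  have "{((\<lambda>k. unitv i k - unitv j k), val_a N i j) | i j. {i, j} \<in> cycle_edges N}
      = (\<lambda>e. (fe N e, hh N e)) ` {..<N} \<union> (\<lambda>e. (\<lambda>k. - fe N e k, hh N e)) ` {..<N}" (is "?L = ?R")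
  proof
    show "?L \<subseteq> ?R"
    proof
      fix t assume "t \<in> ?L"
      then have "\<exists>i j. t = ((\<lambda>k. unitv i k - unitv j k), val_a N i j) \<and> {i, j} \<in> cycle_edges N"
        by (simp only: mem_Collect_eq)
      then obtain i j where t: "t = ((\<lambda>k. unitv i k - unitv j k), val_a N i j)"
        and ij0: "{i, j} \<in> cycle_edges N" by (elim exE conjE)
      from ij0 have "\<exists>e. {i, j} = {e, (e + 1) mod N} \<and> e < N"
        unfolding cycle_edges_def by (simp only: mem_Collect_eq)
      then obtain e where e: "e < N" and ij: "{i, j} = {e, Suc e mod N}" by auto
      have v: "val_a N i j = hh N e" by (rule val_edge[OF N e ij])
      from ij have "(i = e \<and> j = Suc e mod N) \<or> (i = Suc e mod N \<and> j = e)"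
        by (simp add: doubleton_eq_iff)
      then show "t \<in> ?R"
      proof
        assume "i = e \<and> j = Suc e mod N"
        then have "t = (fe N e, hh N e)" using t v by (simp add: fe_def)
        then show ?thesis using e by blast
      next
        assume "i = Suc e mod N \<and> j = e"
        then have "t = ((\<lambda>k. - fe N e k), hh N e)" using t v by (simp add: fe_def)
        then show ?thesis using e by blast
      qed
    qed
    show "?R \<subseteq> ?L"
    proof
      fix t assume "t \<in> ?R"
      then obtain e where e: "e < N" and t: "t = (fe N e, hh N e) \<or> t = ((\<lambda>k. - fe N e k), hh N e)"
        by (auto simp del: uminus_apply)
      have ce: "{e, Suc e mod N} \<in> cycle_edges N" unfolding cycle_edges_def
        by (intro CollectI exI[of _ e]) (use e in simp)
      then have ce': "{Suc e mod N, e} \<in> cycle_edges N" by (simp add: insert_commute)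
      have v1: "val_a N e (Suc e mod N) = hh N e" by (rule val_edge[OF N e]) simp
      have v2: "val_a N (Suc e mod N) e = hh N e" by (rule val_edge[OF N e]) (simp add: insert_commute)
      from t show "t \<in> ?L"
      proof
        assume "t = (fe N e, hh N e)"
        then have "t = ((\<lambda>k. unitv e k - unitv (Suc e mod N) k), val_a N e (Suc e mod N))"
          using v1 by (simp add: fe_def)
        then show ?thesis using ce by (intro CollectI exI[of _ e] exI[of _ "Suc e mod N"]) simp
      next
        assume "t = ((\<lambda>k. - fe N e k), hh N e)"
        then have "t = ((\<lambda>k. unitv (Suc e mod N) k - unitv e k), val_a N (Suc e mod N) e)"
          using v2 by (simp add: fe_def)
        then show ?thesis using ce' by (intro CollectI exI[of _ "Suc e mod N"] exI[of _ e]) simp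
      qed
    qed
  qed
  then show ?thesis unfolding h_terms_def by simp
qed

lemma finite_h_terms: "N \<ge> 3 \<Longrightarrow> finite (h_terms N)"
  by (simp add: h_terms_eq)

locale trw =
  fixes N n :: nat and w :: "nat \<Rightarrow> real"
  assumes N3: "N \<ge> 3" and Nn: "N = Suc n" and w: "w \<in> pts n"
begin

definition "mm = trop_eval (h_terms N) n w"

lemma dd_n: "dd N w e = ip n w (fe N e)"
  unfolding dd_def using Nn by simp

lemma vals:
  "(\<lambda>(a, c). c + ip n w a) ` h_terms N
     = insert 0 ((\<lambda>e. hh N e + dd N w e) ` {..<N} \<union> (\<lambda>e. hh N e - dd N w e) ` {..<N})"
  unfolding h_terms_eq[OF N3] image_insert image_Un image_image by (simp add: ip_zero ip_neg dd_n)

lemma mm_le0: "mm \<le> 0"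
  unfolding mm_def trop_eval_def vals using finite_h_terms[OF N3] by (intro Min_le) auto

lemma mm_le: "e < N \<Longrightarrow> mm \<le> hh N e + dd N w e \<and> mm \<le> hh N e - dd N w e"
  unfolding mm_def trop_eval_def vals using finite_h_terms[OF N3] by (auto intro!: Min_le)

lemma mm_in: "mm = 0 \<or> (\<exists>e<N. mm = hh N e + dd N w e \<or> mm = hh N e - dd N w e)"
proof -
  have "mm \<in> insert 0 ((\<lambda>e. hh N e + dd N w e) ` {..<N} \<union> (\<lambda>e. hh N e - dd N w e) ` {..<N})"
    unfolding mm_def trop_eval_def vals[symmetric] using finite_h_terms[OF N3]
    by (intro Min_in) (auto simp: h_terms_def)
  then show ?thesis by auto
qed

lemma mem_h: "(a, c) \<in> h_terms N \<longleftrightarrow> (a = (\<lambda>_. 0) \<and> c = 0) \<or> (\<exists>e<N. a = fe N e \<and> c = hh N e)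
    \<or> (\<exists>e<N. a = (\<lambda>k. - fe N e k) \<and> c = hh N e)"
  unfolding h_terms_eq[OF N3] by auto

lemma init_char:
  "a \<in> init_exps (h_terms N) n w \<longleftrightarrow>
    (a = (\<lambda>_. 0) \<and> mm = 0) \<or> (\<exists>e<N. a = fe N e \<and> hh N e + dd N w e = mm)
    \<or> (\<exists>e<N. a = (\<lambda>k. - fe N e k) \<and> hh N e - dd N w e = mm)"
proof
  assume "a \<in> init_exps (h_terms N) n w"
  then obtain c where c: "(a, c) \<in> h_terms N" "c + ip n w a = mm"
    unfolding init_exps_def mm_def by blast
  from c(1)[unfolded mem_h] show "(a = (\<lambda>_. 0) \<and> mm = 0) \<or> (\<exists>e<N. a = fe N e \<and> hh N e + dd N w e = mm)
    \<or> (\<exists>e<N. a = (\<lambda>k. - fe N e k) \<and> hh N e - dd N w e = mm)"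
    using c(2) by (auto simp: ip_zero ip_neg dd_n)
next
  assume h: "(a = (\<lambda>_. 0) \<and> mm = 0) \<or> (\<exists>e<N. a = fe N e \<and> hh N e + dd N w e = mm)
    \<or> (\<exists>e<N. a = (\<lambda>k. - fe N e k) \<and> hh N e - dd N w e = mm)"
  have "\<exists>c. (a, c) \<in> h_terms N \<and> c + ip n w a = mm"
  proof -
    { assume "a = (\<lambda>_. 0) \<and> mm = 0"
      then have ?thesis using mem_h[of a 0] by (auto simp: ip_zero) }
    moreover
    { assume "\<exists>e<N. a = fe N e \<and> hh N e + dd N w e = mm"
      then obtain e where "e < N" "a = fe N e" "hh N e + dd N w e = mm" by blast
      then have ?thesis using mem_h[of a "hh N e"] by (auto simp: dd_n) }
    moreover
    { assume "\<exists>e<N. a = (\<lambda>k. - fe N e k) \<and> hh N e - dd N w e = mm"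
      then obtain e where "e < N" "a = (\<lambda>k. - fe N e k)" "hh N e - dd N w e = mm" by blast
      then have ?thesis using mem_h[of a "hh N e"] by (auto simp: dd_n ip_neg) }
    ultimately show ?thesis using h by blast
  qed
  then show "a \<in> init_exps (h_terms N) n w" unfolding init_exps_def mm_def by blast
qed

lemma finite_init: "finite (init_exps (h_terms N) n w)"
proof -
  have "init_exps (h_terms N) n w \<subseteq> fst ` h_terms N" unfolding init_exps_def by force
  then show ?thesis using finite_h_terms[OF N3] finite_subset by blast
qed

lemma sum_dd: "(\<Sum>e<N. dd N w e) = 0"
proof -
  have w0: "w 0 = 0" and wS: "w (Suc n) = 0" using w by (auto simp: pts_def)
  have "dd N w e = w e - w (Suc e)" if "e < N" for e
  proof -
    have "dd N w e = w e - w (Suc e mod N)" unfolding dd_def using ip_fe_pts[of w n] w Nn by simp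
    moreover have "w (Suc e mod N) = w (Suc e)"
      using that Nn w0 wS by (cases "Suc e = N") auto
    ultimately show ?thesis by simp
  qed
  then have "(\<Sum>e<N. dd N w e) = (\<Sum>e<N. w e - w (Suc e))" by simp
  also have "\<dots> = w 0 - w N" by (rule sum_lessThan_telescope')
  also have "\<dots> = 0" using w0 wS Nn by simp
  finally show ?thesis .
qed

end


definition is_vert :: "nat \<Rightarrow> (nat \<Rightarrow> real) \<Rightarrow> bool" where
  "is_vert N w = (\<exists>j<N. \<bar>dd N w j\<bar> < hh N j \<and> (\<forall>e<N. e \<noteq> j \<longrightarrow> \<bar>dd N w e\<bar> = hh N e))"

lemma parity_sum:
  fixes \<sigma> :: "nat \<Rightarrow> real"
  assumes "finite A" "\<forall>e\<in>A. \<sigma> e = 1 \<or> \<sigma> e = -1"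
  shows "(\<Sum>e\<in>A. \<sigma> e) = 2 * real (card {e\<in>A. \<sigma> e = 1}) - real (card A)"
  using assms
proof (induction rule: finite_induct)
  case empty
  then show ?case by simp
next
  case (insert a A)
  have fin: "finite {e\<in>A. \<sigma> e = 1}" using insert by simp
  show ?case
  proof (cases "\<sigma> a = 1")
    case True
    then have "{e\<in>insert a A. \<sigma> e = 1} = insert a {e\<in>A. \<sigma> e = 1}" by auto
    then show ?thesis using insert True fin by simp
  next
    case False
    then have s: "\<sigma> a = -1" using insert by auto
    then have "{e\<in>insert a A. \<sigma> e = 1} = {e\<in>A. \<sigma> e = 1}" by auto
    then show ?thesis using insert s by simp
  qed
qed

lemma sum_hh_even:
  assumes "even N" "N > 0"
  shows "(\<Sum>e<N. f e * hh N e) = (\<Sum>e<N. f e) + f 0"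
proof -
  have "(\<Sum>e<N. f e * hh N e) = (\<Sum>e<N. f e + (if e = 0 then f e else 0))"
    using assms by (intro sum.cong) (auto simp: hh_def)
  also have "\<dots> = (\<Sum>e<N. f e) + f 0" using assms by (simp add: sum.distrib)
  finally show ?thesis .
qed

lemma sum_hh_odd:
  assumes "odd N"
  shows "(\<Sum>e<N. f e * hh N e) = (\<Sum>e<N. f e)"
  using assms by (simp add: hh_def)

context trw begin

lemma self_int_mult_eq: "self_int_mult N w = mixed_volume n (\<lambda>i. conv_hull (init_exps (h_terms N) n w))"
  unfolding self_int_mult_def stable_mult_def using Nn by simp

lemma vert_mult:
  assumes "is_vert N w"
  shows "self_int_mult N w = 1"
proof -
  obtain j where j: "j < N" "\<bar>dd N w j\<bar> < hh N j" and oth: "\<forall>e<N. e \<noteq> j \<longrightarrow> \<bar>dd N w e\<bar> = hh N e"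
    using assms unfolding is_vert_def by blast
  have le: "\<bar>dd N w e\<bar> \<le> hh N e" if "e < N" for e
    using j oth that by (cases "e = j") auto
  have mm0: "mm = 0"
  proof -
    have "mm \<ge> 0" using mm_in le by (auto simp: abs_le_iff) (smt (verit))
    then show ?thesis using mm_le0 by simp
  qed
  define \<sigma> where "\<sigma> e = - dd N w e / hh N e" for e
  have hp: "hh N e > 0" for e using hh_pos[of N e] by simp
  have sgm: "\<sigma> e = 1 \<and> dd N w e = - hh N e \<or> \<sigma> e = -1 \<and> dd N w e = hh N e" if "e < N" "e \<noteq> j" for e
  proof -
    have "dd N w e = - hh N e \<or> dd N w e = hh N e" using oth that by (auto simp: abs_if split: if_splits)
    then show ?thesis using hp[of e] by (auto simp: \<sigma>_def)
  qed
  interpret C: cell N n j \<sigma>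
  proof
    show "N = Suc n" by (rule Nn)
    show "2 \<le> n" using N3 Nn by simp
    show "j \<le> n" using j Nn by simp
    show "\<forall>e\<le>n. e \<noteq> j \<longrightarrow> \<sigma> e = 1 \<or> \<sigma> e = - 1" using sgm Nn by (auto simp: less_Suc_eq_le)
  qed
  have "init_exps (h_terms N) n w = C.S0"
  proof
    show "init_exps (h_terms N) n w \<subseteq> C.S0"
    proof
      fix a assume "a \<in> init_exps (h_terms N) n w"
      then have a: "a = (\<lambda>_. 0) \<or> (\<exists>e<N. a = fe N e \<and> hh N e + dd N w e = 0)
         \<or> (\<exists>e<N. a = (\<lambda>k. - fe N e k) \<and> hh N e - dd N w e = 0)"
        unfolding init_char mm0 by blast
      show "a \<in> C.S0"
      proof -
        { assume "\<exists>e<N. a = fe N e \<and> hh N e + dd N w e = 0"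
          then obtain e where e: "e < N" "a = fe N e" "hh N e + dd N w e = 0" by blast
          have "e \<noteq> j" using e j by auto
          then have "\<sigma> e = 1" using sgm[of e] e hp[of e] by auto
          then have "a = C.v e" using e by (simp add: C.v_def)
          moreover have "e \<in> C.E" using e \<open>e \<noteq> j\<close> Nn by simp
          ultimately have ?thesis unfolding C.S0_def by blast }
        moreover
        { assume "\<exists>e<N. a = (\<lambda>k. - fe N e k) \<and> hh N e - dd N w e = 0"
          then obtain e where e: "e < N" "a = (\<lambda>k. - fe N e k)" "hh N e - dd N w e = 0" by blast
          have "e \<noteq> j" using e j by auto
          then have "\<sigma> e = -1" using sgm[of e] e hp[of e] by auto
          then have "a = C.v e" using e by (simp add: C.v_def)
          moreover have "e \<in> C.E" using e \<open>e \<noteq> j\<close> Nn by simp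
          ultimately have ?thesis unfolding C.S0_def by blast }
        ultimately show ?thesis using a by (auto simp: C.S0_def)
      qed
    qed
    show "C.S0 \<subseteq> init_exps (h_terms N) n w"
    proof
      fix a assume "a \<in> C.S0"
      then have "a = (\<lambda>_. 0) \<or> (\<exists>e\<in>C.E. a = C.v e)" unfolding C.S0_def by blast
      then show "a \<in> init_exps (h_terms N) n w"
      proof
        assume "a = (\<lambda>_. 0)"
        then show ?thesis unfolding init_char mm0 by simp
      next
        assume "\<exists>e\<in>C.E. a = C.v e"
        then obtain e where e0: "e \<in> C.E" "a = C.v e" by blast
        then have e: "e \<le> n" "e \<noteq> j" "a = C.v e" by auto
        have eN: "e < N" using e Nn by simp
        from sgm[OF eN e(2)] show ?thesis
        proof
          assume h: "\<sigma> e = 1 \<and> dd N w e = - hh N e"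
          then have "a = fe N e" using e by (simp add: C.v_def)
          then show ?thesis unfolding init_char mm0 using h eN by auto
        next
          assume h: "\<sigma> e = -1 \<and> dd N w e = hh N e"
          then have "a = (\<lambda>k. - fe N e k)" using e by (simp add: C.v_def)
          then show ?thesis unfolding init_char mm0 using h eN by auto
        qed
      qed
    qed
  qed
  then show ?thesis unfolding self_int_mult_eq using C.mv_cell by simp
qed

end


context trw begin

lemma zero_from_delta:
  fixes \<delta> :: "nat \<Rightarrow> real"
  assumes s: "(\<Sum>e<N. \<delta> e) = 0" and e0: "e0 < N" "\<delta> e0 \<noteq> 0"
    and h: "\<forall>a\<in>init_exps (h_terms N) n w. (a = (\<lambda>_. 0) \<and> D = 0) \<or> (\<exists>e<N. a = fe N e \<and> \<delta> e = D)
          \<or> (\<exists>e<N. a = (\<lambda>k. - fe N e k) \<and> - \<delta> e = D)"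
  shows "self_int_mult N w = 0"
proof -
  have e0n: "e0 \<le> n" using e0 Nn by simp
  obtain k where k: "k \<in> {1..n}" "cvec N \<delta> k \<noteq> 0" using cvec_nonzero[OF Nn s e0n e0(2)] by blast
  have "\<forall>a\<in>init_exps (h_terms N) n w. ip n (cvec N \<delta>) a = D"
  proof
    fix a assume "a \<in> init_exps (h_terms N) n w"
    then have "(a = (\<lambda>_. 0) \<and> D = 0) \<or> (\<exists>e<N. a = fe N e \<and> \<delta> e = D)
          \<or> (\<exists>e<N. a = (\<lambda>k. - fe N e k) \<and> - \<delta> e = D)" using h by blast
    then show "ip n (cvec N \<delta>) a = D"
    proof (elim disjE exE conjE)
      assume "a = (\<lambda>_. 0)" "D = 0" then show ?thesis by (simp add: ip_zero)
    next
      fix e assume "e < N" "a = fe N e" "\<delta> e = D"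
      then show ?thesis using ip_cvec[OF Nn s, of e] Nn by simp
    next
      fix e assume "e < N" "a = (\<lambda>k. - fe N e k)" "- \<delta> e = D"
      then show ?thesis using ip_cvec[OF Nn s, of e] Nn by (simp add: ip_neg)
    qed
  qed
  then show ?thesis unfolding self_int_mult_eq
    using mixed_volume_zero[where c="cvec N \<delta>" and k=k and D=D and n=n] finite_init k
    by blast
qed

definition "pos e \<longleftrightarrow> hh N e + dd N w e = mm"
definition "neg e \<longleftrightarrow> hh N e - dd N w e = mm"
definition "sgn_e e = (if pos e then 1 else (-1::real))"

lemma not_both: "\<not> (pos e \<and> neg e)"
proof
  assume "pos e \<and> neg e"
  then have "hh N e = mm" by (simp add: pos_def neg_def)
  then show False using mm_le0 hh_pos[of N e] by simp
qed

lemma init_pn: "a \<in> init_exps (h_terms N) n w \<Longrightarrow>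
   (a = (\<lambda>_. 0) \<and> mm = 0) \<or> (\<exists>e<N. a = fe N e \<and> pos e) \<or> (\<exists>e<N. a = (\<lambda>k. - fe N e k) \<and> neg e)"
  unfolding init_char pos_def neg_def by blast

lemma dd_act: "pos e \<or> neg e \<Longrightarrow> dd N w e = sgn_e e * (mm - hh N e)"
  using not_both[of e] by (auto simp: sgn_e_def pos_def neg_def)

lemma sgn_pm: "sgn_e e = 1 \<or> sgn_e e = -1" by (simp add: sgn_e_def)

lemma nonvert_mult:
  assumes nv: "\<not> is_vert N w"
  shows "self_int_mult N w = 0"
proof -
  define In where "In = {e. e < N \<and> \<not> pos e \<and> \<not> neg e}"
  define Act where "Act = {e. e < N \<and> (pos e \<or> neg e)}"
  have finA: "finite Act" unfolding Act_def by simp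
  have ActN: "Act \<subseteq> {..<N}" unfolding Act_def by auto
  have N0: "N > 0" using N3 by simp
  show ?thesis
  proof (cases "mm = 0")
    case mm0: True
    show ?thesis
    proof (cases "\<exists>p q. p \<in> In \<and> q \<in> In \<and> p \<noteq> q")
      case True
      then obtain p q where pq: "p \<in> In" "q \<in> In" "p \<noteq> q" by blast
      define \<delta> where "\<delta> e = (if e = p then 1 else 0) - (if e = q then 1 else (0::real))" for e
      have s: "(\<Sum>e<N. \<delta> e) = 0" unfolding \<delta>_def using pq by (simp add: sum_subtractf In_def)
      show ?thesis
      proof (rule zero_from_delta[OF s, of p 0])
        show "p < N" using pq by (simp add: In_def)
        show "\<delta> p \<noteq> 0" using pq by (simp add: \<delta>_def)
        show "\<forall>a\<in>init_exps (h_terms N) n w. (a = (\<lambda>_. 0) \<and> (0::real) = 0) \<or> (\<exists>e<N. a = fe N e \<and> \<delta> e = 0)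
          \<or> (\<exists>e<N. a = (\<lambda>k. - fe N e k) \<and> - \<delta> e = 0)"
        proof
          fix a assume "a \<in> init_exps (h_terms N) n w"
          from init_pn[OF this] show "(a = (\<lambda>_. 0) \<and> (0::real) = 0) \<or> (\<exists>e<N. a = fe N e \<and> \<delta> e = 0)
          \<or> (\<exists>e<N. a = (\<lambda>k. - fe N e k) \<and> - \<delta> e = 0)"
          proof (elim disjE exE conjE)
            assume "a = (\<lambda>_. 0)" then show ?thesis by simp
          next
            fix e assume "e < N" "a = fe N e" "pos e"
            then have "e \<noteq> p" "e \<noteq> q" using pq by (auto simp: In_def)
            then show ?thesis using \<open>e < N\<close> \<open>a = fe N e\<close> by (auto simp: \<delta>_def)
          next
            fix e assume "e < N" "a = (\<lambda>k. - fe N e k)" "neg e"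
            then have "e \<noteq> p" "e \<noteq> q" using pq by (auto simp: In_def)
            then show ?thesis using \<open>e < N\<close> \<open>a = (\<lambda>k. - fe N e k)\<close> by (auto simp: \<delta>_def)
          qed
        qed
      qed
    next
      case False
      then have atmost1: "\<forall>p\<in>In. \<forall>q\<in>In. p = q" by blast
      show ?thesis
      proof (cases "In = {}")
        case False
        then obtain j where jI: "j \<in> In" by blast
        have "is_vert N w"
          unfolding is_vert_def
        proof (intro exI[of _ j] conjI allI impI)
          show "j < N" using jI by (simp add: In_def)
          have "hh N j + dd N w j > 0" "hh N j - dd N w j > 0"
            using jI mm_le[of j] mm0 by (auto simp: In_def pos_def neg_def)
          then show "\<bar>dd N w j\<bar> < hh N j" by (simp add: abs_less_iff)
          fix e assume e: "e < N" "e \<noteq> j"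
          then have "e \<notin> In" using atmost1 jI by blast
          then have "pos e \<or> neg e" using e by (simp add: In_def)
          then show "\<bar>dd N w e\<bar> = hh N e" using mm0 hh_pos[of N e] by (auto simp: pos_def neg_def)
        qed
        then show ?thesis using nv by simp
      next
        case True
        then have all: "\<forall>e<N. pos e \<or> neg e" by (auto simp: In_def)
        have "(\<Sum>e<N. dd N w e) = (\<Sum>e<N. - (sgn_e e * hh N e))"
          using all dd_act mm0 by (intro sum.cong) auto
        then have s0: "(\<Sum>e<N. sgn_e e * hh N e) = 0" using sum_dd by (simp add: sum_negf)
        define K where "K = card {e\<in>{..<N}. sgn_e e = 1}"
        have par: "(\<Sum>e<N. sgn_e e) = 2 * real K - real N"
          unfolding K_def using parity_sum[of "{..<N}" sgn_e] sgn_pm by simp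
        show ?thesis
        proof (cases "even N")
          case True
          have "2 * real K - real N + sgn_e 0 = 0" using s0 sum_hh_even[OF True N0, of sgn_e] par by simp
          then have "real N = 2 * real K + 1 \<or> real N + 1 = 2 * real K" using sgn_pm[of 0] by auto
          then have "N = 2 * K + 1 \<or> N + 1 = 2 * K" by linarith
          then have False using True by presburger
          then show ?thesis ..
        next
          case False
          have "2 * real K - real N = 0" using s0 sum_hh_odd[OF False, of sgn_e] par by simp
          then have "N = 2 * K" by linarith
          then have False using False by presburger
          then show ?thesis ..
        qed
      qed
    qed
  next
    case mmn: False
    then have mmneg: "mm < 0" using mm_le0 by simp
    obtain e0 where e0: "e0 \<in> Act"
    proof -
      from mm_in mmn obtain e where "e < N" "mm = hh N e + dd N w e \<or> mm = hh N e - dd N w e" by blast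
      then have "e \<in> Act" by (auto simp: Act_def pos_def neg_def)
      then show ?thesis using that by blast
    qed
    have sgnz: "sgn_e e \<noteq> 0" for e by (simp add: sgn_e_def)
    have initD: "\<forall>a\<in>init_exps (h_terms N) n w. (a = (\<lambda>_. 0) \<and> (1::real) = 0) \<or> (\<exists>e<N. a = fe N e \<and> \<delta> e = 1)
          \<or> (\<exists>e<N. a = (\<lambda>k. - fe N e k) \<and> - \<delta> e = 1)"
      if hd: "\<forall>e\<in>Act. \<delta> e = sgn_e e" for \<delta> :: "nat \<Rightarrow> real"
    proof
      fix a assume "a \<in> init_exps (h_terms N) n w"
      from init_pn[OF this] show "(a = (\<lambda>_. 0) \<and> (1::real) = 0) \<or> (\<exists>e<N. a = fe N e \<and> \<delta> e = 1)
          \<or> (\<exists>e<N. a = (\<lambda>k. - fe N e k) \<and> - \<delta> e = 1)"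
      proof (elim disjE exE conjE)
        assume "mm = 0" then show ?thesis using mmn by simp
      next
        fix e assume e: "e < N" "a = fe N e" "pos e"
        then have "\<delta> e = 1" using hd by (auto simp: Act_def sgn_e_def)
        then show ?thesis using e by blast
      next
        fix e assume e: "e < N" "a = (\<lambda>k. - fe N e k)" "neg e"
        then have "\<delta> e = -1" using hd not_both[of e] by (auto simp: Act_def sgn_e_def)
        then show ?thesis using e by auto
      qed
    qed
    show ?thesis
    proof (cases "In = {}")
      case False
      then obtain q where qI: "q \<in> In" by blast
      have qA: "q \<notin> Act" using qI by (auto simp: In_def Act_def)
      have qN: "q < N" using qI by (simp add: In_def)
      define \<delta> where "\<delta> e = (if e \<in> Act then sgn_e e else 0) + (if e = q then - (\<Sum>e'\<in>Act. sgn_e e') else 0)" for e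
      have s: "(\<Sum>e<N. \<delta> e) = 0"
      proof -
        have "(\<Sum>e<N. \<delta> e) = (\<Sum>e<N. if e \<in> Act then sgn_e e else 0) + (\<Sum>e<N. if e = q then - (\<Sum>e'\<in>Act. sgn_e e') else 0)"
          unfolding \<delta>_def by (rule sum.distrib)
        also have "(\<Sum>e<N. if e \<in> Act then sgn_e e else 0) = (\<Sum>e\<in>Act. sgn_e e)"
          using ActN by (simp add: sum.If_cases Int_absorb1 inf.absorb_iff2)
        also have "(\<Sum>e<N. if e = q then - (\<Sum>e'\<in>Act. sgn_e e') else 0) = - (\<Sum>e'\<in>Act. sgn_e e')"
          using qN by simp
        finally show ?thesis by simp
      qed
      have hd: "\<forall>e\<in>Act. \<delta> e = sgn_e e" using qA by (auto simp: \<delta>_def)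
      show ?thesis
      proof (rule zero_from_delta[OF s, of e0 1])
        show "e0 < N" using e0 by (simp add: Act_def)
        show "\<delta> e0 \<noteq> 0" using hd e0 sgnz by simp
        show "\<forall>a\<in>init_exps (h_terms N) n w. (a = (\<lambda>_. 0) \<and> (1::real) = 0) \<or> (\<exists>e<N. a = fe N e \<and> \<delta> e = 1)
          \<or> (\<exists>e<N. a = (\<lambda>k. - fe N e k) \<and> - \<delta> e = 1)" by (rule initD[OF hd])
      qed
    next
      case True
      then have all: "\<forall>e<N. pos e \<or> neg e" by (auto simp: In_def)
      then have ActU: "Act = {..<N}" by (auto simp: Act_def)
      have sd: "(\<Sum>e<N. sgn_e e * (mm - hh N e)) = 0"
        using sum_dd all dd_act by (metis (no_types, lifting) lessThan_iff sum.cong)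
      define K where "K = card {e\<in>{..<N}. sgn_e e = 1}"
      have par: "(\<Sum>e<N. sgn_e e) = 2 * real K - real N"
        unfolding K_def using parity_sum[of "{..<N}" sgn_e] sgn_pm by simp
      have split: "(\<Sum>e<N. sgn_e e * (mm - hh N e)) = mm * (\<Sum>e<N. sgn_e e) - (\<Sum>e<N. sgn_e e * hh N e)"
        by (simp add: algebra_simps sum_subtractf sum_distrib_left)
      show ?thesis
      proof (cases "even N")
        case True
        have "mm * (2 * real K - real N) - (2 * real K - real N) - sgn_e 0 = 0"
          using sd split sum_hh_even[OF True N0, of sgn_e] par by simp
        then have eq: "(mm - 1) * (2 * real K - real N) = sgn_e 0" by (simp add: algebra_simps)
        show ?thesis
        proof (cases "2 * real K - real N = 0")
          case True
          then show ?thesis using eq sgnz[of 0] by simp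
        next
          case False
          then have "2 * K \<noteq> N" by auto
          then have "2 * K + 1 \<le> N \<or> N + 1 \<le> 2 * K" by arith
          then have "real (2 * K + 1) \<le> real N \<or> real (N + 1) \<le> real (2 * K)" by (simp only: of_nat_le_iff)
          then have "\<bar>2 * real K - real N\<bar> \<ge> 1" by auto
          moreover have "\<bar>mm - 1\<bar> > 1" using mmneg by simp
          ultimately have "\<bar>(mm - 1) * (2 * real K - real N)\<bar> > 1"
            by (simp add: abs_mult) (smt (verit) mult_less_cancel_left2 mult_le_cancel_left1)
          then show ?thesis using eq sgn_pm[of 0] by auto
        qed
      next
        case False
        have "(mm - 1) * (\<Sum>e<N. sgn_e e) = 0"
          using sd split sum_hh_odd[OF False, of sgn_e] by (simp add: algebra_simps)
        then have s: "(\<Sum>e<N. sgn_e e) = 0" using mmneg by simp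
        show ?thesis
        proof (rule zero_from_delta[OF s, of 0 1])
          show "0 < N" by (rule N0)
          show "sgn_e 0 \<noteq> 0" by (rule sgnz)
          show "\<forall>a\<in>init_exps (h_terms N) n w. (a = (\<lambda>_. 0) \<and> (1::real) = 0) \<or> (\<exists>e<N. a = fe N e \<and> sgn_e e = 1)
          \<or> (\<exists>e<N. a = (\<lambda>k. - fe N e k) \<and> - sgn_e e = 1)" by (rule initD) simp
        qed
      qed
    qed
  qed
qed

end


definition sgP :: "nat set \<Rightarrow> nat \<Rightarrow> real" where "sgP P e = (if e \<in> P then 1 else -1)"
definition Dv :: "nat \<Rightarrow> nat \<Rightarrow> nat set \<Rightarrow> nat \<Rightarrow> real" where
  "Dv N j P e = (if e = j then - (\<Sum>e'\<in>{..<N}-{j}. sgP P e' * hh N e') else sgP P e * hh N e)"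
definition wof :: "nat \<Rightarrow> (nat \<Rightarrow> real) \<Rightarrow> nat \<Rightarrow> real" where
  "wof N D = (\<lambda>k. if k \<in> {1..N-1} then (\<Sum>e\<in>{k..N-1}. D e) else 0)"
definition Idx :: "nat \<Rightarrow> (nat \<times> nat set) set" where
  "Idx N = Sigma {..<N} (\<lambda>j. {P. P \<subseteq> {..<N} - {j} \<and> \<bar>\<Sum>e\<in>{..<N}-{j}. sgP P e * hh N e\<bar> < hh N j})"

lemma wof_pts: "wof N D \<in> pts (N - 1)"
  unfolding wof_def pts_def by auto

lemma dd_pts: "w \<in> pts n \<Longrightarrow> N = Suc n \<Longrightarrow> dd N w e = w e - w (Suc e mod N)"
  unfolding dd_def using ip_fe_pts by simp

lemma dd_wof:
  assumes N: "N = Suc n" and n1: "n \<ge> 1" and s: "(\<Sum>e<N. D e) = 0" and e: "e < N"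
  shows "dd N (wof N D) e = D e"
proof -
  have wp: "wof N D \<in> pts n" using wof_pts[of N D] N by simp
  have W: "wof N D k = (if k \<in> {1..n} then (\<Sum>e\<in>{k..n}. D e) else 0)" for k
    unfolding wof_def using N by simp
  have s': "D 0 + (\<Sum>e\<in>{Suc 0..n}. D e) = 0"
  proof -
    have "(\<Sum>e<N. D e) = (\<Sum>e\<in>{0..n}. D e)" using N by (simp add: lessThan_Suc_atMost atLeast0AtMost)
    also have "\<dots> = D 0 + (\<Sum>e\<in>{Suc 0..n}. D e)" by (rule sum.atLeast_Suc_atMost) simp
    finally show ?thesis using s by simp
  qed
  show ?thesis
  proof (cases "e < n")
    case True
    then have m: "Suc e mod N = Suc e" using N by simp
    show ?thesis
    proof (cases "e = 0")
      case True
      then show ?thesis using dd_pts[OF wp N] m W s' \<open>e < n\<close> by simp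
    next
      case False
      have "(\<Sum>i\<in>{e..n}. D i) = D e + (\<Sum>i\<in>{Suc e..n}. D i)"
        by (rule sum.atLeast_Suc_atMost) (use True in simp)
      then show ?thesis using dd_pts[OF wp N] m W False True by simp
    qed
  next
    case False
    then have en: "e = n" using e N by simp
    then have "Suc e mod N = 0" using N by simp
    then show ?thesis using dd_pts[OF wp N] W en n1 by simp
  qed
qed

lemma wof_dd:
  assumes N: "N = Suc n" and w: "w \<in> pts n"
  shows "wof N (dd N w) = w"
proof
  fix k
  have w0: "w 0 = 0" and wS: "w (Suc n) = 0" using w by (auto simp: pts_def)
  have ddw: "dd N w e = w e - w (Suc e)" if "e \<le> n" for e
  proof -
    have "w (Suc e mod N) = w (Suc e)" using that N w0 wS by (cases "Suc e = N") auto
    then show ?thesis using dd_pts[OF w N] by simp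
  qed
  show "wof N (dd N w) k = w k"
  proof (cases "k \<in> {1..n}")
    case True
    have "(\<Sum>e\<in>{k..n}. dd N w e) = (\<Sum>e\<in>{k..n}. w e - w (Suc e))" using ddw by simp
    also have "\<dots> = - (\<Sum>e\<in>{k..n}. w (Suc e) - w e)" by (simp add: sum_negf[symmetric])
    also have "\<dots> = w k" using sum_Suc_diff[of k n w] True wS by simp
    finally show ?thesis using True N by (simp add: wof_def)
  next
    case False
    then show ?thesis using w N by (auto simp: wof_def pts_def)
  qed
qed

lemma wof_cong: "(\<forall>e<N. D e = D' e) \<Longrightarrow> wof N D = wof N D'"
  unfolding wof_def by (intro ext) (auto intro!: sum.cong)

lemma sum_Dv: "j < N \<Longrightarrow> (\<Sum>e<N. Dv N j P e) = 0"
proof -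
  assume j: "j < N"
  have "(\<Sum>e<N. Dv N j P e) = Dv N j P j + (\<Sum>e\<in>{..<N}-{j}. Dv N j P e)"
    using j by (subst sum.remove[of _ j]) auto
  also have "(\<Sum>e\<in>{..<N}-{j}. Dv N j P e) = (\<Sum>e\<in>{..<N}-{j}. sgP P e * hh N e)"
    by (intro sum.cong) (auto simp: Dv_def)
  finally show ?thesis by (simp add: Dv_def)
qed

lemma abs_sgP_hh: "\<bar>sgP P e * hh N e\<bar> = hh N e"
  using hh_pos[of N e] by (simp add: sgP_def abs_mult)

lemma vert_image:
  assumes N3: "N \<ge> 3" and N: "N = Suc n"
  shows "{w \<in> pts n. is_vert N w} = (\<lambda>(j, P). wof N (Dv N j P)) ` Idx N"
proof
  have n1: "n \<ge> 1" using N3 N by simp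
  show "(\<lambda>(j, P). wof N (Dv N j P)) ` Idx N \<subseteq> {w \<in> pts n. is_vert N w}"
  proof
    fix w assume "w \<in> (\<lambda>(j, P). wof N (Dv N j P)) ` Idx N"
    then obtain jP where jP0: "jP \<in> Idx N" and w0: "w = (\<lambda>(j, P). wof N (Dv N j P)) jP" by (rule imageE)
    obtain j P where jPe: "jP = (j, P)" by (cases jP)
    have jP: "(j, P) \<in> Idx N" and w: "w = wof N (Dv N j P)" using jP0 w0 jPe by auto
    have j: "j < N" and cond: "\<bar>\<Sum>e\<in>{..<N}-{j}. sgP P e * hh N e\<bar> < hh N j" using jP by (auto simp: Idx_def)
    have wp: "w \<in> pts n" using w wof_pts[of N] N by simp
    have dd: "dd N w e = Dv N j P e" if "e < N" for e
      unfolding w by (rule dd_wof[OF N n1 sum_Dv[OF j] that])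
    have "is_vert N w" unfolding is_vert_def
    proof (intro exI[of _ j] conjI allI impI)
      show "j < N" by fact
      show "\<bar>dd N w j\<bar> < hh N j" using dd[OF j] cond by (simp add: Dv_def)
      fix e assume "e < N" "e \<noteq> j"
      then show "\<bar>dd N w e\<bar> = hh N e" using dd abs_sgP_hh by (simp add: Dv_def)
    qed
    then show "w \<in> {w \<in> pts n. is_vert N w}" using wp by simp
  qed
  show "{w \<in> pts n. is_vert N w} \<subseteq> (\<lambda>(j, P). wof N (Dv N j P)) ` Idx N"
  proof
    fix w assume "w \<in> {w \<in> pts n. is_vert N w}"
    then have wp: "w \<in> pts n" and v: "is_vert N w" by auto
    obtain j where j: "j < N" "\<bar>dd N w j\<bar> < hh N j" and oth: "\<forall>e<N. e \<noteq> j \<longrightarrow> \<bar>dd N w e\<bar> = hh N e"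
      using v unfolding is_vert_def by blast
    define P where "P = {e \<in> {..<N} - {j}. dd N w e = hh N e}"
    have sgd: "sgP P e * hh N e = dd N w e" if "e \<in> {..<N} - {j}" for e
    proof -
      have "dd N w e = hh N e \<or> dd N w e = - hh N e" using oth that by (auto simp: abs_if split: if_splits)
      then show ?thesis using that hh_pos[of N e] by (auto simp: sgP_def P_def)
    qed
    interpret T: trw N n w using N3 N wp by unfold_locales
    have "(\<Sum>e<N. dd N w e) = dd N w j + (\<Sum>e\<in>{..<N}-{j}. dd N w e)"
      using j by (subst sum.remove[of _ j]) auto
    then have sA: "(\<Sum>e\<in>{..<N}-{j}. sgP P e * hh N e) = - dd N w j"
      using T.sum_dd sgd by simp
    have Pin: "(j, P) \<in> Idx N" unfolding Idx_def using j sA by (auto simp: P_def)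
    have "Dv N j P e = dd N w e" if "e < N" for e
      using sA sgd that by (cases "e = j") (auto simp: Dv_def)
    then have "wof N (Dv N j P) = wof N (dd N w)" by (intro wof_cong) auto
    also have "\<dots> = w" by (rule wof_dd[OF N wp])
    finally show "w \<in> (\<lambda>(j, P). wof N (Dv N j P)) ` Idx N" using Pin by force
  qed
qed

lemma vert_inj:
  assumes N3: "N \<ge> 3" and N: "N = Suc n"
  shows "inj_on (\<lambda>(j, P). wof N (Dv N j P)) (Idx N)"
proof (rule inj_onI)
  have n1: "n \<ge> 1" using N3 N by simp
  fix x y assume ax: "x \<in> Idx N" and bx: "y \<in> Idx N"
    and eqx: "(\<lambda>(j, P). wof N (Dv N j P)) x = (\<lambda>(j, P). wof N (Dv N j P)) y"
  obtain j P where xe: "x = (j, P)" by (cases x)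
  obtain j' P' where ye: "y = (j', P')" by (cases y)
  have a: "(j, P) \<in> Idx N" and b: "(j', P') \<in> Idx N"
    and eq: "wof N (Dv N j P) = wof N (Dv N j' P')" using ax bx eqx xe ye by auto
  have j: "j < N" and cj: "\<bar>\<Sum>e\<in>{..<N}-{j}. sgP P e * hh N e\<bar> < hh N j" and PA: "P \<subseteq> {..<N} - {j}"
    using a by (auto simp: Idx_def)
  have j': "j' < N" and cj': "\<bar>\<Sum>e\<in>{..<N}-{j'}. sgP P' e * hh N e\<bar> < hh N j'" and PA': "P' \<subseteq> {..<N} - {j'}"
    using b by (auto simp: Idx_def)
  have D: "Dv N j P e = Dv N j' P' e" if "e < N" for e
    using dd_wof[OF N n1 sum_Dv[OF j, of P] that] dd_wof[OF N n1 sum_Dv[OF j', of P'] that] eq by simp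
  have jeq: "j = j'"
  proof (rule ccontr)
    assume "j \<noteq> j'"
    then have "\<bar>Dv N j P j'\<bar> = hh N j'" using abs_sgP_hh by (simp add: Dv_def)
    moreover have "\<bar>Dv N j' P' j'\<bar> < hh N j'" using cj' by (simp add: Dv_def)
    ultimately show False using D[OF j'] by simp
  qed
  from jeq have jj: "j' = j" by simp
  have mem: "e \<in> Q \<longleftrightarrow> Dv N j Q e = hh N e" if "e \<in> {..<N} - {j}" for e Q
    using that hh_pos[of N e] by (auto simp: Dv_def sgP_def)
  have "P = P'"
  proof
    show "P \<subseteq> P'"
    proof
      fix e assume e: "e \<in> P"
      then have eA: "e \<in> {..<N} - {j}" using PA by auto
      then have "Dv N j P e = hh N e" using mem[of e P] e by simp
      then have "Dv N j P' e = hh N e" using D[of e] eA jj by simp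
      then show "e \<in> P'" using mem[OF eA, of P'] by simp
    qed
    show "P' \<subseteq> P"
    proof
      fix e assume e: "e \<in> P'"
      then have eA: "e \<in> {..<N} - {j}" using PA' jj by auto
      then have "Dv N j P' e = hh N e" using mem[of e P'] e by simp
      then have "Dv N j P e = hh N e" using D[of e] eA jj by simp
      then show "e \<in> P" using mem[OF eA, of P] by simp
    qed
  qed
  then show "x = y" using xe ye jeq by simp
qed


lemma sum_sgP:
  assumes "finite A" "P \<subseteq> A"
  shows "(\<Sum>e\<in>A. sgP P e) = of_int (2 * int (card P) - int (card A))"
proof -
  have "{e\<in>A. sgP P e = 1} = P" using assms(2) by (auto simp: sgP_def)
  then show ?thesis using parity_sum[OF assms(1), of "sgP P"] by (simp add: sgP_def)
qed

lemma sum_sgP_hh: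
  assumes j: "j < N" and P: "P \<subseteq> {..<N} - {j}"
  shows "(\<Sum>e\<in>{..<N}-{j}. sgP P e * hh N e)
     = of_int (2 * int (card P) - int (N - 1)) + (if even N \<and> j \<noteq> 0 then sgP P 0 else 0)"
proof -
  have "(\<Sum>e\<in>{..<N}-{j}. sgP P e * hh N e) = (\<Sum>e\<in>{..<N}-{j}. sgP P e + (if even N \<and> e = 0 then sgP P e else 0))"
    by (intro sum.cong) (auto simp: hh_def)
  also have "\<dots> = (\<Sum>e\<in>{..<N}-{j}. sgP P e) + (\<Sum>e\<in>{..<N}-{j}. if even N \<and> e = 0 then sgP P e else 0)"
    by (rule sum.distrib)
  also have "(\<Sum>e\<in>{..<N}-{j}. sgP P e) = of_int (2 * int (card P) - int (N - 1))"
    using sum_sgP[OF _ P] j by simp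
  also have "(\<Sum>e\<in>{..<N}-{j}. if even N \<and> e = 0 then sgP P e else 0) = (if even N \<and> j \<noteq> 0 then sgP P 0 else 0)"
  proof (cases "even N \<and> j \<noteq> 0")
    case True
    then have "0 \<in> {..<N}-{j}" using j by auto
    then show ?thesis using True by (simp add: sum.delta)
  next
    case False
    have "(\<Sum>e\<in>{..<N}-{j}. if even N \<and> e = 0 then sgP P e else 0) = 0"
    proof (intro sum.neutral ballI)
      fix x assume "x \<in> {..<N}-{j}"
      then show "(if even N \<and> x = 0 then sgP P x else 0) = 0" using False by auto
    qed
    moreover have "(if even N \<and> j \<noteq> 0 then sgP P 0 else 0) = 0" using False by (simp only: if_False)
    ultimately show ?thesis by simp
  qed
  finally show ?thesis .
qed

lemma card_k: "finite A \<Longrightarrow> card {P. P \<subseteq> A \<and> card P = k} = card A choose k"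
  by (rule n_subsets)

lemma card_with0:
  assumes fA: "finite A" and z: "z \<in> A"
  shows "card {P. P \<subseteq> A \<and> z \<in> P \<and> card P = k} = (card A choose k) - ((card A - 1) choose k)"
proof -
  have U: "{P. P \<subseteq> A \<and> card P = k} = {P. P \<subseteq> A \<and> z \<in> P \<and> card P = k} \<union> {P. P \<subseteq> A - {z} \<and> card P = k}"
    by auto
  have "card {P. P \<subseteq> A \<and> card P = k} = card {P. P \<subseteq> A \<and> z \<in> P \<and> card P = k} + card {P. P \<subseteq> A - {z} \<and> card P = k}"
    unfolding U using fA by (intro card_Un_disjoint) auto
  moreover have "card {P. P \<subseteq> A - {z} \<and> card P = k} = (card A - 1) choose k"
    using card_k[of "A - {z}" k] fA z by simp
  ultimately show ?thesis using card_k[OF fA, of k] by simp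
qed

lemma card_without0:
  assumes fA: "finite A" and z: "z \<in> A"
  shows "card {P. P \<subseteq> A \<and> z \<notin> P \<and> card P = k} = (card A - 1) choose k"
proof -
  have "{P. P \<subseteq> A \<and> z \<notin> P \<and> card P = k} = {P. P \<subseteq> A - {z} \<and> card P = k}" by auto
  then show ?thesis using card_k[of "A - {z}" k] fA z by simp
qed

lemma binom_ident:
  "(2*K+3 choose (K+1)) + (2*K+3 choose (K+2)) + (2*K+3) * ((2*K+3 choose (K+1)) - (2*K+2 choose (K+1)) + (2*K+2 choose (K+2)))
   = (2*K+4) * (2*K+3 choose (K+1))"
proof -
  define B where "B = 2*K+3 choose (K+1)"
  define C where "C = 2*K+2 choose K"
  have h: "(Suc (2*K+2)) choose (Suc K) = (2*K+2 choose K) + (2*K+2 choose Suc K)" by (rule binomial_Suc_Suc)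
  have e1: "2*K+3 = Suc (2*K+2)" and e2: "K+1 = Suc K" by simp_all
  have p: "B = C + (2*K+2 choose (K+1))" unfolding B_def C_def using h by (simp only: e1 e2)
  have s1: "(2*K+2 choose (K+2)) = C" unfolding C_def
    using binomial_symmetric[of K "2*K+2"] by (simp add: numeral_2_eq_2)
  have s2: "(2*K+3 choose (K+2)) = B" unfolding B_def
    using binomial_symmetric[of "K+1" "2*K+3"] by (simp add: numeral_2_eq_2 numeral_3_eq_3)
  have ab: "(K+1) * B = (2*K+3) * C" unfolding B_def C_def
    using binomial_absorption[of K "2*K+3"] by simp
  have "(2*K+3 choose (K+1)) + (2*K+3 choose (K+2)) + (2*K+3) * ((2*K+3 choose (K+1)) - (2*K+2 choose (K+1)) + (2*K+2 choose (K+2)))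
      = 2 * B + 2 * ((2*K+3) * C)" using p s1 s2 unfolding B_def[symmetric] by simp
  also have "\<dots> = 2 * B + 2 * ((K+1) * B)" using ab by simp
  also have "\<dots> = (2*K+4) * B" by (simp add: algebra_simps)
  finally show ?thesis unfolding B_def .
qed


definition Bj :: "nat \<Rightarrow> nat \<Rightarrow> nat set set" where
  "Bj N j = {P. P \<subseteq> {..<N} - {j} \<and> \<bar>\<Sum>e\<in>{..<N}-{j}. sgP P e * hh N e\<bar> < hh N j}"

lemma abs_of_int_lt: "\<bar>(of_int z :: real)\<bar> < of_int b \<longleftrightarrow> \<bar>z\<bar> < b"
  by (metis of_int_abs of_int_less_iff)

lemma Bj_odd:
  assumes j: "j < N" and odd: "odd N"
  shows "Bj N j = {P. P \<subseteq> {..<N} - {j} \<and> card P = (N - 1) div 2}"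
proof -
  have "(\<bar>\<Sum>e\<in>{..<N}-{j}. sgP P e * hh N e\<bar> < hh N j) \<longleftrightarrow> card P = (N - 1) div 2"
    if P: "P \<subseteq> {..<N} - {j}" for P
  proof -
    have e1: "(\<Sum>e\<in>{..<N}-{j}. sgP P e * hh N e) = of_int (2 * int (card P) - int (N - 1))"
      using sum_sgP_hh[OF j P] odd by simp
    have e2: "hh N j = of_int 1" using odd by (simp add: hh_def)
    have "(\<bar>\<Sum>e\<in>{..<N}-{j}. sgP P e * hh N e\<bar> < hh N j) \<longleftrightarrow> \<bar>2 * int (card P) - int (N - 1)\<bar> < 1"
      unfolding e1 e2 by (rule abs_of_int_lt)
    also have "\<dots> \<longleftrightarrow> card P = (N - 1) div 2" using odd by presburger
    finally show ?thesis .
  qed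
  then show ?thesis unfolding Bj_def by blast
qed

lemma Bj_even0:
  assumes N0: "N > 0" and ev: "even N"
  shows "Bj N 0 = {P. P \<subseteq> {..<N} - {0} \<and> card P = N div 2 - 1} \<union> {P. P \<subseteq> {..<N} - {0} \<and> card P = N div 2}"
proof -
  have "(\<bar>\<Sum>e\<in>{..<N}-{0}. sgP P e * hh N e\<bar> < hh N 0) \<longleftrightarrow> (card P = N div 2 - 1 \<or> card P = N div 2)"
    if P: "P \<subseteq> {..<N} - {0}" for P
  proof -
    have e1: "(\<Sum>e\<in>{..<N}-{0}. sgP P e * hh N e) = of_int (2 * int (card P) - int (N - 1))"
      using sum_sgP_hh[OF N0 P] by simp
    have e2: "hh N 0 = of_int 2" using ev by (simp add: hh_def)
    have "(\<bar>\<Sum>e\<in>{..<N}-{0}. sgP P e * hh N e\<bar> < hh N 0) \<longleftrightarrow> \<bar>2 * int (card P) - int (N - 1)\<bar> < 2"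
      unfolding e1 e2 by (rule abs_of_int_lt)
    also have "\<dots> \<longleftrightarrow> (card P = N div 2 - 1 \<or> card P = N div 2)" using ev N0 by presburger
    finally show ?thesis .
  qed
  then show ?thesis unfolding Bj_def by blast
qed

lemma Bj_evenj:
  assumes j: "j < N" "j \<noteq> 0" and ev: "even N"
  shows "Bj N j = {P. P \<subseteq> {..<N} - {j} \<and> 0 \<in> P \<and> card P = N div 2 - 1} \<union> {P. P \<subseteq> {..<N} - {j} \<and> 0 \<notin> P \<and> card P = N div 2}"
proof -
  have "(\<bar>\<Sum>e\<in>{..<N}-{j}. sgP P e * hh N e\<bar> < hh N j) \<longleftrightarrow> ((0 \<in> P \<and> card P = N div 2 - 1) \<or> (0 \<notin> P \<and> card P = N div 2))"
    if P: "P \<subseteq> {..<N} - {j}" for P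
  proof -
    define s :: int where "s = (if 0 \<in> P then 1 else -1)"
    have e1: "(\<Sum>e\<in>{..<N}-{j}. sgP P e * hh N e) = of_int (2 * int (card P) - int (N - 1) + s)"
      using sum_sgP_hh[OF j(1) P] ev j by (simp add: sgP_def s_def)
    have e2: "hh N j = of_int 1" using j by (simp add: hh_def)
    have "(\<bar>\<Sum>e\<in>{..<N}-{j}. sgP P e * hh N e\<bar> < hh N j) \<longleftrightarrow> \<bar>2 * int (card P) - int (N - 1) + s\<bar> < 1"
      unfolding e1 e2 by (rule abs_of_int_lt)
    also have "\<dots> \<longleftrightarrow> ((0 \<in> P \<and> card P = N div 2 - 1) \<or> (0 \<notin> P \<and> card P = N div 2))"
      using ev j unfolding s_def by (cases "0 \<in> P") (simp_all, presburger+)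
    finally show ?thesis .
  qed
  then show ?thesis unfolding Bj_def by blast
qed

lemma card_Idx:
  assumes N3: "N \<ge> 3"
  shows "finite (Idx N) \<and> card (Idx N) = N * ((N - 1) choose ((N - 1) div 2))"
proof -
  have Idx: "Idx N = Sigma {..<N} (Bj N)" unfolding Idx_def Bj_def by simp
  have finB: "finite (Bj N j)" for j
    unfolding Bj_def by (rule finite_subset[of _ "Pow ({..<N} - {j})"]) auto
  have fin: "finite (Idx N)" unfolding Idx using finB by simp
  have cardI: "card (Idx N) = (\<Sum>j<N. card (Bj N j))" unfolding Idx using finB by (simp add: card_SigmaI)
  have cA: "card ({..<N} - {j}) = N - 1" if "j < N" for j using that by simp
  have cA0: "card ({..<N} - {j} - {0}) = N - 2" if "j < N" "j \<noteq> 0" for j using that by (simp add: card_Diff_singleton_if)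
  show ?thesis
  proof (cases "even N")
    case False
    have "(\<Sum>j<N. card (Bj N j)) = (\<Sum>j<N. (N - 1) choose ((N - 1) div 2))"
    proof (intro sum.cong refl)
      fix j assume "j \<in> {..<N}"
      then have j: "j < N" by simp
      show "card (Bj N j) = (N - 1) choose ((N - 1) div 2)"
        unfolding Bj_odd[OF j False] using card_k[of "{..<N} - {j}" "(N - 1) div 2"] cA[OF j] by simp
    qed
    then show ?thesis using fin cardI by simp
  next
    case True
    have "N = 2 * ((N - 4) div 2) + 4" using True N3 by presburger
    then obtain K where K: "N = 2 * K + 4" by blast
    have Nd: "N div 2 = K + 2" "N div 2 - 1 = K + 1" "N - 1 = 2 * K + 3" "N - 2 = 2 * K + 2"
      "(N - 1) div 2 = K + 1" using K by simp_all
    have N0: "N > 0" using K by simp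
    define X0 where "X0 = (2*K+3 choose (K+1)) + (2*K+3 choose (K+2))"
    define X1 where "X1 = (2*K+3 choose (K+1)) - (2*K+2 choose (K+1)) + (2*K+2 choose (K+2))"
    have c0: "card (Bj N 0) = X0"
    proof -
      have "card (Bj N 0) = card {P. P \<subseteq> {..<N} - {0} \<and> card P = K + 1} + card {P. P \<subseteq> {..<N} - {0} \<and> card P = K + 2}"
      proof -
        have "Bj N 0 = {P. P \<subseteq> {..<N} - {0} \<and> card P = K + 1} \<union> {P. P \<subseteq> {..<N} - {0} \<and> card P = K + 2}"
          using Bj_even0[OF N0 True] Nd by simp
        then show ?thesis by (simp only:) (rule card_Un_disjoint, auto)
      qed
      also have "\<dots> = X0" unfolding X0_def using card_k[of "{..<N} - {0}"] cA[of 0] K by (simp add: add.commute)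
      finally show ?thesis .
    qed
    have c1: "card (Bj N j) = X1" if j: "j < N" "j \<noteq> 0" for j
    proof -
      have z: "0 \<in> {..<N} - {j}" using j by auto
      have "card (Bj N j) = card {P. P \<subseteq> {..<N} - {j} \<and> 0 \<in> P \<and> card P = K + 1} + card {P. P \<subseteq> {..<N} - {j} \<and> 0 \<notin> P \<and> card P = K + 2}"
      proof -
        have "Bj N j = {P. P \<subseteq> {..<N} - {j} \<and> 0 \<in> P \<and> card P = K + 1} \<union> {P. P \<subseteq> {..<N} - {j} \<and> 0 \<notin> P \<and> card P = K + 2}"
          using Bj_evenj[OF j True] Nd by simp
        then show ?thesis by (simp only:) (rule card_Un_disjoint, auto)
      qed
      also have "\<dots> = X1" unfolding X1_def using card_with0[OF _ z, of "K+1"] card_without0[OF _ z, of "K+2"] cA[OF j(1)] K by (simp add: add.commute del: binomial_Suc_Suc)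
      finally show ?thesis .
    qed
    have NS: "N = Suc (2*K+3)" using K by simp
    have "(\<Sum>j<N. card (Bj N j)) = (\<Sum>j<Suc (2*K+3). card (Bj N j))" by (subst NS) (rule refl)
    also have "\<dots> = card (Bj N 0) + (\<Sum>j<2*K+3. card (Bj N (Suc j)))"
      by (rule sum.lessThan_Suc_shift)
    also have "\<dots> = X0 + (2*K+3) * X1" using c0 c1 K by simp
    also have "\<dots> = (2*K+4) * (2*K+3 choose (K+1))" unfolding X0_def X1_def by (rule binom_ident)
    finally have cc: "card (Idx N) = (2*K+4) * (2*K+3 choose (K+1))" using cardI by simp
    have "N * ((N - 1) choose ((N - 1) div 2)) = (2*K+4) * (2*K+3 choose (K+1))"
      by (subst Nd(5), subst Nd(3), subst K, rule refl)
    then show ?thesis using fin cc by simp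
  qed
qed


theorem proposition9p4:
  fixes N :: nat
  assumes "N \<ge> 3"
  shows "finite (self_int_points N)
    \<and> card (self_int_points N) = N * ((N - 1) choose ((N - 1) div 2))
    \<and> (\<forall>w\<in>self_int_points N. self_int_mult N w = 1)"
proof -
  define n where "n = N - 1"
  have N: "N = Suc n" using assms by (simp add: n_def)
  have tr: "trw N n w" if "w \<in> pts n" for w using assms N that by unfold_locales
  have SP: "self_int_points N = {w \<in> pts n. is_vert N w}"
  proof
    show "self_int_points N \<subseteq> {w \<in> pts n. is_vert N w}"
    proof
      fix w assume "w \<in> self_int_points N"
      then have w: "w \<in> pts n" "self_int_mult N w \<noteq> 0" unfolding self_int_points_def n_def by auto
      then have "is_vert N w" using trw.nonvert_mult[OF tr[OF w(1)]] by blast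
      then show "w \<in> {w \<in> pts n. is_vert N w}" using w by simp
    qed
    show "{w \<in> pts n. is_vert N w} \<subseteq> self_int_points N"
    proof
      fix w assume "w \<in> {w \<in> pts n. is_vert N w}"
      then have w: "w \<in> pts n" "is_vert N w" by auto
      then have "self_int_mult N w = 1" using trw.vert_mult[OF tr[OF w(1)]] by blast
      then show "w \<in> self_int_points N" using w unfolding self_int_points_def n_def by simp
    qed
  qed
  have img: "self_int_points N = (\<lambda>(j, P). wof N (Dv N j P)) ` Idx N"
    unfolding SP by (rule vert_image[OF assms N])
  have ci: "finite (Idx N) \<and> card (Idx N) = N * ((N - 1) choose ((N - 1) div 2))"
    by (rule card_Idx[OF assms])
  have "card (self_int_points N) = card (Idx N)"
    unfolding img by (rule card_image[OF vert_inj[OF assms N]])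
  moreover have "finite (self_int_points N)" unfolding img using ci by simp
  moreover have "\<forall>w\<in>self_int_points N. self_int_mult N w = 1"
    unfolding SP using trw.vert_mult[OF tr] by blast
  ultimately show ?thesis using ci by simp
qed


end
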